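(* Let $\Delta t_{\mathrm{CFL,gen}}$ be the generalized CFL limit of the whole region and, for each $1\le i\le n_x$, $1\le j\le n_y$, $1\le k\le n_z$, let $\Delta t^{(i,j,k)}_{\mathrm{CFL,gen}}$ be the generalized CFL limit of the single-cell region ($n_x=n_y=n_z=1$) formed by the primary cell with corners $(i,j,k)$ and $(i+1,j+1,k+1)$, with the same $\hbar,m,\Delta x,\Delta y,\Delta z$ and with potential $U_{i+a,j+b,k+c}$ ($a,b,c\in\{0,1\}$) at its local node $(a+1,b+1,c+1)$. Then $$\min_{i,j,k}\Delta t^{(i,j,k)}_{\mathrm{CFL,gen}}\le\Delta t_{\mathrm{CFL,gen}}.$$
   Context: Fix constants $\hbar>0$, $m>0$, cell sizes $\Delta x,\Delta y,\Delta z>0$ and positive integers $n_x,n_y,n_z$. A region is a box of $n_x\times n_y\times n_z$ primary cells of size $\Delta x\times\Delta y\times\Delta z$ with primary nodes $(i,j,k)$, $1\le i\le n_x+1$, $1\le j\le n_y+1$, $1\le k\le n_z+1$. Let $N=(n_x+1)(n_y+1)(n_z+1)$; node-indexed vectors use the ordering $i+(j-1)(n_x+1)+(k-1)(n_x+1)(n_y+1)$. Real potential values $U_{i,j,k}$ are given at the nodes; $D_U$ is the $N\times N$ diagonal matrix containing them. Let $I_p$ be the $p\times p$ identity, $\tilde I_p=\mathrm{diag}(\tfrac12,1,\dots,1,\tfrac12)$ ($p\times p$; $\tilde I_2=\tfrac12I_2$), $W_p=[0_{p\times1}\ I_p]-[I_p\ 0_{p\times 1}]$ ($p\times(p+1)$),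 $\otimes$ the Kronecker product. For a region define $D_V''=\Delta x\Delta y\Delta z\,\tilde I_{n_z+1}\otimes\tilde I_{n_y+1}\otimes\tilde I_{n_x+1}$; $D=[D_x\ D_y\ D_z]$ with $D_x=-I_{n_z+1}\otimes I_{n_y+1}\otimes W_{n_x}^T$, $D_y=-I_{n_z+1}\otimes W_{n_y}^T\otimes I_{n_x+1}$, $D_z=-W_{n_z}^T\otimes I_{n_y+1}\otimes I_{n_x+1}$; $D_S''=\mathrm{diag}(\Delta y\Delta z\,\tilde I_{n_z+1}\otimes\tilde I_{n_y+1}\otimes I_{n_x},\ \Delta x\Delta z\,\tilde I_{n_z+1}\otimes I_{n_y}\otimes\tilde I_{n_x+1},\ \Delta x\Delta y\,I_{n_z}\otimes\tilde I_{n_y+1}\otimes\tilde I_{n_x+1})$; $D_l'=\mathrm{diag}(\Delta x\, I_{n_x(n_y+1)(n_z+1)},\ \Delta y\, I_{(n_x+1)n_y(n_z+1)},\ \Delta z\, I_{(n_x+1)(n_y+1)n_z})$; $H=\frac{\hbar^2}{2m}D D_S''(D_l')^{-1}D^T+D_V''D_U$. The generalized CFL limit of a region is $\Delta t_{\mathrm{CFL,gen}}=2/\rho\!\left(\frac{1}{\hbar}(D_V'')^{-1/2}H(D_V'')^{-1/2}\right)$, with $\rho$ the spectral radius. *)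

theory Defs
  imports "Jordan_Normal_Form.Spectral_Radius"
begin

definition kron :: "real mat \<Rightarrow> real mat \<Rightarrow> real mat" where
  "kron A B = mat (dim_row A * dim_row B) (dim_col A * dim_col B)
     (\<lambda>(i,j). A $$ (i div dim_row B, j div dim_col B) * B $$ (i mod dim_row B, j mod dim_col B))"

definition Itil :: "nat \<Rightarrow> real mat" where
  "Itil p = mat p p (\<lambda>(i,j). if i = j then (if i = 0 \<or> i = p - 1 then 1/2 else 1) else 0)"

definition Wm :: "nat \<Rightarrow> real mat" where
  "Wm p = mat p (p+1) (\<lambda>(i,j). (if j = i + 1 then 1 else 0) - (if j = i then 1 else 0))"

definition hcat3 :: "real mat \<Rightarrow> real mat \<Rightarrow> real mat \<Rightarrow> real mat" where
  "hcat3 A B C = mat (dim_row A) (dim_col A + dim_col B + dim_col C)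
     (\<lambda>(i,j). if j < dim_col A then A $$ (i,j)
             else if j < dim_col A + dim_col B then B $$ (i, j - dim_col A)
             else C $$ (i, j - dim_col A - dim_col B))"

definition bdiag3 :: "real mat \<Rightarrow> real mat \<Rightarrow> real mat \<Rightarrow> real mat" where
  "bdiag3 A B C = (let a = dim_row A; b = dim_row B; c = dim_row C in
     mat (a+b+c) (a+b+c)
     (\<lambda>(i,j). if i < a \<and> j < a then A $$ (i,j)
             else if a \<le> i \<and> i < a+b \<and> a \<le> j \<and> j < a+b then B $$ (i-a, j-a)
             else if a+b \<le> i \<and> a+b \<le> j then C $$ (i-a-b, j-a-b)
             else 0))"

definition diag_inv_sqrt :: "real mat \<Rightarrow> real mat" where
  "diag_inv_sqrt A = mat (dim_row A) (dim_row A)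
     (\<lambda>(i,j). if i = j then 1 / sqrt (A $$ (i,i)) else 0)"

definition DV :: "real \<Rightarrow> real \<Rightarrow> real \<Rightarrow> nat \<Rightarrow> nat \<Rightarrow> nat \<Rightarrow> real mat" where
  "DV dx dy dz nx ny nz =
     (dx*dy*dz) \<cdot>\<^sub>m kron (Itil (nz+1)) (kron (Itil (ny+1)) (Itil (nx+1)))"

definition Dmat :: "nat \<Rightarrow> nat \<Rightarrow> nat \<Rightarrow> real mat" where
  "Dmat nx ny nz = hcat3
     (- kron (1\<^sub>m (nz+1)) (kron (1\<^sub>m (ny+1)) (transpose_mat (Wm nx))))
     (- kron (1\<^sub>m (nz+1)) (kron (transpose_mat (Wm ny)) (1\<^sub>m (nx+1))))
     (- kron (transpose_mat (Wm nz)) (kron (1\<^sub>m (ny+1)) (1\<^sub>m (nx+1))))"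

definition DS :: "real \<Rightarrow> real \<Rightarrow> real \<Rightarrow> nat \<Rightarrow> nat \<Rightarrow> nat \<Rightarrow> real mat" where
  "DS dx dy dz nx ny nz = bdiag3
     ((dy*dz) \<cdot>\<^sub>m kron (Itil (nz+1)) (kron (Itil (ny+1)) (1\<^sub>m nx)))
     ((dx*dz) \<cdot>\<^sub>m kron (Itil (nz+1)) (kron (1\<^sub>m ny) (Itil (nx+1))))
     ((dx*dy) \<cdot>\<^sub>m kron (1\<^sub>m nz) (kron (Itil (ny+1)) (Itil (nx+1))))"

(* (D_l')^{-1}, the inverse of the diagonal matrix
   D_l' = diag(dx I, dy I, dz I), written out explicitly *)
definition Dl_inv :: "real \<Rightarrow> real \<Rightarrow> real \<Rightarrow> nat \<Rightarrow> nat \<Rightarrow> nat \<Rightarrow> real mat" where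
  "Dl_inv dx dy dz nx ny nz = bdiag3
     ((1/dx) \<cdot>\<^sub>m 1\<^sub>m (nx*(ny+1)*(nz+1)))
     ((1/dy) \<cdot>\<^sub>m 1\<^sub>m ((nx+1)*ny*(nz+1)))
     ((1/dz) \<cdot>\<^sub>m 1\<^sub>m ((nx+1)*(ny+1)*nz))"

(* D_U: node r (0-based) corresponds to node (i,j,k) with
   r = (i-1) + (j-1)(nx+1) + (k-1)(nx+1)(ny+1); U uses 1-based node indices *)
definition DUm :: "nat \<Rightarrow> nat \<Rightarrow> nat \<Rightarrow> (nat \<Rightarrow> nat \<Rightarrow> nat \<Rightarrow> real) \<Rightarrow> real mat" where
  "DUm nx ny nz U = (let N = (nx+1)*(ny+1)*(nz+1) in
     mat N N (\<lambda>(r,s). if r = s then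
        U (r mod (nx+1) + 1) ((r div (nx+1)) mod (ny+1) + 1) (r div ((nx+1)*(ny+1)) + 1)
      else 0))"

definition Hmat :: "real \<Rightarrow> real \<Rightarrow> real \<Rightarrow> real \<Rightarrow> real \<Rightarrow> nat \<Rightarrow> nat \<Rightarrow> nat
                     \<Rightarrow> (nat \<Rightarrow> nat \<Rightarrow> nat \<Rightarrow> real) \<Rightarrow> real mat" where
  "Hmat hbar m dx dy dz nx ny nz U =
     (hbar^2 / (2*m)) \<cdot>\<^sub>m (Dmat nx ny nz * DS dx dy dz nx ny nz * Dl_inv dx dy dz nx ny nz
                           * transpose_mat (Dmat nx ny nz))
     + DV dx dy dz nx ny nz * DUm nx ny nz U"

definition cfl_gen :: "real \<Rightarrow> real \<Rightarrow> real \<Rightarrow> real \<Rightarrow> real \<Rightarrow> nat \<Rightarrow> nat \<Rightarrow> nat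
                     \<Rightarrow> (nat \<Rightarrow> nat \<Rightarrow> nat \<Rightarrow> real) \<Rightarrow> real" where
  "cfl_gen hbar m dx dy dz nx ny nz U =
     2 / spectral_radius (map_mat complex_of_real
       ((1/hbar) \<cdot>\<^sub>m (diag_inv_sqrt (DV dx dy dz nx ny nz) * Hmat hbar m dx dy dz nx ny nz U
                       * diag_inv_sqrt (DV dx dy dz nx ny nz))))"

end

theory Submission
  imports Defs
begin

lemma qf_sum:
  fixes A :: "'a::comm_semiring_0 mat"
  assumes "A \<in> carrier_mat n n" "x \<in> carrier_vec n"
  shows "x \<bullet> (A *\<^sub>v x) = (\<Sum>i<n. \<Sum>j<n. x$i * A$$(i,j) * x$j)"
  using assms
  by (auto simp: scalar_prod_def row_def sum_distrib_left mult.assoc atLeast0LessThan intro!: sum.cong)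

lemma mv_sum:
  fixes A :: "'a::comm_semiring_0 mat"
  assumes "A \<in> carrier_mat n n" "x \<in> carrier_vec n" "i < n"
  shows "(A *\<^sub>v x) $ i = (\<Sum>j<n. A$$(i,j) * x$j)"
  using assms by (auto simp: scalar_prod_def row_def atLeast0LessThan intro!: sum.cong)

lemma sp_sum:
  fixes x :: "'a::comm_semiring_0 vec"
  assumes "y \<in> carrier_vec n"
  shows "x \<bullet> y = (\<Sum>i<n. x$i * y$i)"
  using assms by (auto simp: scalar_prod_def atLeast0LessThan)

lemma CS_sum:
  fixes a b :: "nat \<Rightarrow> real"
  shows "(\<Sum>i\<in>I. a i * b i)^2 \<le> (\<Sum>i\<in>I. (a i)^2) * (\<Sum>i\<in>I. (b i)^2)"
proof (cases "(\<Sum>i\<in>I. (b i)^2) = 0")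
  case True
  have "(\<Sum>i\<in>I. a i * b i) = 0"
  proof (cases "finite I")
    case True
    with \<open>(\<Sum>i\<in>I. (b i)^2) = 0\<close> have "\<forall>i\<in>I. (b i)^2 = 0"
      by (subst (asm) sum_nonneg_eq_0_iff) auto
    thus ?thesis by auto
  qed auto
  thus ?thesis by (simp add: sum_nonneg mult_nonneg_nonneg)
next
  case False
  define B where "B = (\<Sum>i\<in>I. (b i)^2)"
  define C where "C = (\<Sum>i\<in>I. a i * b i)"
  define A where "A = (\<Sum>i\<in>I. (a i)^2)"
  have Bpos: "B > 0" using False unfolding B_def by (metis order_le_neq_trans sum_nonneg zero_le_power2)
  define r where "r = C / B"
  have "0 \<le> (\<Sum>i\<in>I. (a i - r * b i)^2)" by (rule sum_nonneg) auto
  also have "\<dots> = A - 2 * r * C + r^2 * B"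
    unfolding A_def B_def C_def power2_eq_square
    by (simp add: algebra_simps sum.distrib sum_subtractf sum_distrib_left)
  also have "\<dots> = A - C^2 / B" unfolding r_def using Bpos by (simp add: field_simps power2_eq_square)
  finally have "C^2 / B \<le> A" by simp
  hence "C^2 \<le> A * B" using Bpos by (simp add: field_simps)
  thus ?thesis unfolding A_def B_def C_def .
qed

lemma CS_vec:
  fixes u v :: "real vec"
  assumes "u \<in> carrier_vec n" "v \<in> carrier_vec n"
  shows "(u \<bullet> v)^2 \<le> (u \<bullet> u) * (v \<bullet> v)"
  using assms CS_sum[of "\<lambda>i. u$i" "\<lambda>i. v$i" "{..<n}"]
  by (simp add: sp_sum[OF assms(2)] sp_sum[OF assms(1)] power2_eq_square)

lemma pow_mat_add:
  fixes A :: "'a::semiring_1 mat"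
  assumes A: "A \<in> carrier_mat n n"
  shows "A ^\<^sub>m (a + b) = A ^\<^sub>m a * A ^\<^sub>m b"
proof (induct b)
  case 0 then show ?case using A by simp
next
  case (Suc b)
  have "A ^\<^sub>m (a + Suc b) = A ^\<^sub>m (a + b) * A" by simp
  also have "\<dots> = (A ^\<^sub>m a * A ^\<^sub>m b) * A" using Suc by simp
  also have "\<dots> = A ^\<^sub>m a * (A ^\<^sub>m b * A)"
    by (rule assoc_mult_mat[of _ n n _ n _ n], insert A, auto)
  finally show ?case by simp
qed

lemma pow_mat_sym:
  fixes C :: "real mat"
  assumes C: "C \<in> carrier_mat n n" and s: "transpose_mat C = C"
  shows "transpose_mat (C ^\<^sub>m k) = C ^\<^sub>m k"
proof (induct k)
  case 0 then show ?case using C by simp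
next
  case (Suc k)
  have "transpose_mat (C ^\<^sub>m Suc k) = transpose_mat (C ^\<^sub>m k * C)" by simp
  also have "\<dots> = transpose_mat C * transpose_mat (C ^\<^sub>m k)"
    by (rule transpose_mult[of _ n n _ n], insert C, auto)
  also have "\<dots> = C * C ^\<^sub>m k" using Suc s C by simp
  also have "\<dots> = C ^\<^sub>m 1 * C ^\<^sub>m k" using C by simp
  also have "\<dots> = C ^\<^sub>m (1 + k)" by (rule pow_mat_add[OF C, symmetric])
  finally show ?case by simp
qed

lemma sym_square_step:
  fixes M :: "real mat"
  assumes M: "M \<in> carrier_mat n n" and s: "transpose_mat M = M" and w: "w \<in> carrier_vec n"
  shows "(w \<bullet> (M *\<^sub>v w))^2 \<le> (w \<bullet> w) * (w \<bullet> ((M * M) *\<^sub>v w))"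
proof -
  have "(M * M) *\<^sub>v w = M *\<^sub>v (M *\<^sub>v w)" using M w by auto
  hence "w \<bullet> ((M * M) *\<^sub>v w) = (transpose_mat M *\<^sub>v w) \<bullet> (M *\<^sub>v w)"
    using transpose_vec_mult_scalar[OF M, of "M *\<^sub>v w" w] M w by auto
  also have "\<dots> = (M *\<^sub>v w) \<bullet> (M *\<^sub>v w)" using s by simp
  finally have e: "w \<bullet> ((M * M) *\<^sub>v w) = (M *\<^sub>v w) \<bullet> (M *\<^sub>v w)" .
  show ?thesis unfolding e by (rule CS_vec[of _ n], insert M w, auto)
qed

lemma sr_smult_le:
  assumes A: "(A :: complex mat) \<in> carrier_mat n n" and n: "n > 0" and c: "c > 0"
  shows "spectral_radius (complex_of_real c \<cdot>\<^sub>m A) \<le> c * spectral_radius A"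
proof -
  have cA: "complex_of_real c \<cdot>\<^sub>m A \<in> carrier_mat n n" using A by simp
  from spectral_radius_mem_max(1)[OF cA n] obtain mu where
    mu: "mu \<in> spectrum (complex_of_real c \<cdot>\<^sub>m A)" and eq: "spectral_radius (complex_of_real c \<cdot>\<^sub>m A) = norm mu"
    by auto
  from mu obtain v where ev: "eigenvector (complex_of_real c \<cdot>\<^sub>m A) v mu"
    unfolding spectrum_def eigenvalue_def by auto
  hence v: "v \<in> carrier_vec n" "v \<noteq> 0\<^sub>v n" and e: "(complex_of_real c \<cdot>\<^sub>m A) *\<^sub>v v = mu \<cdot>\<^sub>v v"
    unfolding eigenvector_def using A by auto
  have "A *\<^sub>v v = (mu / complex_of_real c) \<cdot>\<^sub>v v"
  proof (rule eq_vecI)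
    fix i assume "i < dim_vec ((mu / complex_of_real c) \<cdot>\<^sub>v v)"
    hence i: "i < n" using v by auto
    have "((complex_of_real c \<cdot>\<^sub>m A) *\<^sub>v v) $ i = (mu \<cdot>\<^sub>v v) $ i" using e by simp
    hence "complex_of_real c * (row A i \<bullet> v) = mu * v $ i" using i A v
      by (simp add: row_def scalar_prod_def sum_distrib_left mult.assoc)
    thus "(A *\<^sub>v v) $ i = ((mu / complex_of_real c) \<cdot>\<^sub>v v) $ i" using i A v c
      by (simp add: field_simps)
  qed (insert A v, auto)
  hence "eigenvector A v (mu / complex_of_real c)" unfolding eigenvector_def using v A by auto
  hence "mu / complex_of_real c \<in> spectrum A" unfolding spectrum_def eigenvalue_def by auto
  hence "norm (mu / complex_of_real c) \<le> spectral_radius A"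
    using spectral_radius_mem_max(2)[OF A n] by auto
  hence "norm mu / c \<le> spectral_radius A" using c by (simp add: norm_divide)
  thus ?thesis using eq c by (simp add: field_simps)
qed

lemma sr_nonneg:
  assumes A: "(A :: complex mat) \<in> carrier_mat n n" and n: "n > 0"
  shows "spectral_radius A \<ge> 0"
  using spectral_radius_mem_max(1)[OF A n] by auto

lemma qf_bound:
  fixes M :: "real mat"
  assumes M: "M \<in> carrier_mat n n" and w: "w \<in> carrier_vec n"
    and b: "\<And>i j. i < n \<Longrightarrow> j < n \<Longrightarrow> \<bar>M $$ (i,j)\<bar> \<le> c"
  shows "\<bar>w \<bullet> (M *\<^sub>v w)\<bar> \<le> c * (\<Sum>i<n. \<bar>w$i\<bar>)^2"
proof -
  have "\<bar>w \<bullet> (M *\<^sub>v w)\<bar> = \<bar>\<Sum>i<n. \<Sum>j<n. w$i * M$$(i,j) * w$j\<bar>" using qf_sum[OF M w] by simp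
  also have "\<dots> \<le> (\<Sum>i<n. \<bar>\<Sum>j<n. w$i * M$$(i,j) * w$j\<bar>)" by (rule sum_abs)
  also have "\<dots> \<le> (\<Sum>i<n. \<Sum>j<n. \<bar>w$i * M$$(i,j) * w$j\<bar>)" by (intro sum_mono sum_abs)
  also have "\<dots> \<le> (\<Sum>i<n. \<Sum>j<n. \<bar>w$i\<bar> * c * \<bar>w$j\<bar>)"
    by (intro sum_mono, auto simp: abs_mult intro!: mult_right_mono mult_left_mono b)
  also have "\<dots> = c * (\<Sum>i<n. \<bar>w$i\<bar>)^2"
    by (simp add: power2_eq_square sum_distrib_left sum_distrib_right mult_ac)
  finally show ?thesis .
qed

lemma numrad:
  fixes B :: "real mat"
  assumes B: "B \<in> carrier_mat n n" and s: "transpose_mat B = B" and w: "w \<in> carrier_vec n"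
  shows "\<bar>w \<bullet> (B *\<^sub>v w)\<bar> \<le> spectral_radius (map_mat complex_of_real B) * (w \<bullet> w)"
proof (cases "n = 0")
  case True
  then show ?thesis using w B by (simp add: sp_sum[of _ 0])
next
  case False
  hence n: "n > 0" by simp
  define A where "A = map_mat complex_of_real B"
  have A: "A \<in> carrier_mat n n" using B unfolding A_def by simp
  define rho where "rho = spectral_radius A"
  define q where "q = w \<bullet> (B *\<^sub>v w)"
  define N2 where "N2 = w \<bullet> w"
  have rho0: "rho \<ge> 0" unfolding rho_def by (rule sr_nonneg[OF A n])
  have N2s: "N2 = (\<Sum>i<n. (w$i)^2)" unfolding N2_def using w by (simp add: sp_sum power2_eq_square)
  have N20: "N2 \<ge> 0" unfolding N2s by (simp add: sum_nonneg)
  show ?thesis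
  proof (rule ccontr)
    assume "\<not> ?thesis"
    hence lt: "rho * N2 < \<bar>q\<bar>" unfolding rho_def A_def q_def N2_def by simp
    have N2p: "N2 > 0"
    proof (rule ccontr)
      assume "\<not> N2 > 0"
      hence "N2 = 0" using N20 by simp
      hence "\<forall>i\<in>{..<n}. (w$i)^2 = 0" unfolding N2s by (subst (asm) sum_nonneg_eq_0_iff) auto
      hence "q = 0" unfolding q_def qf_sum[OF B w] by simp
      thus False using lt \<open>N2 = 0\<close> by simp
    qed
    define Q where "Q = \<bar>q\<bar> / N2"
    define r where "r = (rho + Q) / 2"
    have q1: "Q > rho" unfolding Q_def using lt N2p by (simp add: field_simps)
    have r01: "r > 0" "rho < r" "r < Q" unfolding r_def using q1 rho0 by (auto simp: field_simps)
    have r0: "r > 0" "rho < r" "r * N2 < \<bar>q\<bar>" using r01 N2p unfolding Q_def by (auto simp: field_simps)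
    define C where "C = (1 / r) \<cdot>\<^sub>m B"
    have C: "C \<in> carrier_mat n n" using B unfolding C_def by simp
    have Cs: "transpose_mat C = C" unfolding C_def
      by (rule eq_matI, insert B s, auto, metis index_transpose_mat(1) carrier_matD)
    have mC: "map_mat complex_of_real C = complex_of_real (1/r) \<cdot>\<^sub>m A"
      unfolding C_def A_def by (rule eq_matI, auto)
    have "spectral_radius (map_mat complex_of_real C) \<le> (1/r) * rho"
      unfolding mC rho_def by (rule sr_smult_le[OF A n], insert r0, simp)
    also have "\<dots> < 1" using r0 by (simp add: field_simps)
    finally have "spectral_radius (map_mat complex_of_real C) < 1" .
    from spectral_radius_jnf_norm_bound_less_1_upper_triangular[OF _ this] C
    obtain c0 where c0: "\<And>k. norm_bound (map_mat complex_of_real C ^\<^sub>m k) c0" by fastforce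
    have bnd: "\<bar>(C ^\<^sub>m k) $$ (i,j)\<bar> \<le> c0" if "i < n" "j < n" for k i j
    proof -
      have "map_mat complex_of_real C ^\<^sub>m k = map_mat complex_of_real (C ^\<^sub>m k)"
        by (rule of_real_hom.mat_hom_pow[OF C, symmetric])
      with c0[of k] that C show ?thesis unfolding norm_bound_def by auto
    qed
    define S where "S = (\<Sum>i<n. \<bar>w$i\<bar>)"
    define f where "f k = w \<bullet> ((C ^\<^sub>m (2^k)) *\<^sub>v w)" for k
    have fb: "\<bar>f k\<bar> \<le> c0 * S^2" for k unfolding f_def S_def
      by (rule qf_bound[OF _ w], insert C bnd, auto)
    define t where "t = \<bar>q\<bar> / (r * N2)"
    have t1: "t > 1" unfolding t_def using r0 N2p by (simp add: field_simps)
    have "f 0 = w \<bullet> (C *\<^sub>v w)" unfolding f_def using C by simp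
    also have "\<dots> = (\<Sum>i<n. \<Sum>j<n. w$i * C$$(i,j) * w$j)" by (rule qf_sum[OF C w])
    also have "\<dots> = (\<Sum>i<n. \<Sum>j<n. w$i * B$$(i,j) * w$j / r)" using B
      by (auto simp: C_def intro!: sum.cong)
    also have "\<dots> = q / r" unfolding q_def qf_sum[OF B w] by (simp add: sum_divide_distrib)
    finally have f0: "\<bar>f 0\<bar> = t * N2" unfolding t_def using r0 N2p by (simp add: abs_divide)
    have fstep: "(f k)^2 \<le> N2 * f (Suc k)" for k
    proof -
      define M where "M = C ^\<^sub>m (2^k)"
      have M: "M \<in> carrier_mat n n" unfolding M_def using C by simp
      have Ms: "transpose_mat M = M" unfolding M_def by (rule pow_mat_sym[OF C Cs])
      have "C ^\<^sub>m (2^Suc k) = M * M" unfolding M_def using pow_mat_add[OF C, of "2^k" "2^k"]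
        by (simp add: mult_2)
      thus ?thesis using sym_square_step[OF M Ms w] unfolding f_def N2_def M_def by simp
    qed
    have grow: "f (Suc k) \<ge> N2 * t^(2^(Suc k))" for k
    proof (induct k)
      case 0
      have "(t * N2)^2 \<le> N2 * f 1" using fstep[of 0] f0 by (metis One_nat_def power2_abs)
      hence "N2 * (N2 * t^2) \<le> N2 * f 1" by (simp add: power2_eq_square mult_ac)
      hence "N2 * t^2 \<le> f 1" using N2p by simp
      thus ?case by simp
    next
      case (Suc k)
      have nn: "0 \<le> N2 * t^(2^(Suc k))" using N20 t1 by simp
      have "(N2 * t^(2^(Suc k)))^2 \<le> (f (Suc k))^2" using Suc nn by (intro power_mono) auto
      also have "\<dots> \<le> N2 * f (Suc (Suc k))" by (rule fstep)
      finally have "N2 * (N2 * t^(2^(Suc (Suc k)))) \<le> N2 * f (Suc (Suc k))"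
        by (simp add: power2_eq_square power_add mult_ac mult_2 flip: power_mult)
      thus ?case using N2p by simp
    qed
    obtain K where K: "c0 * S^2 / N2 < t^K" using real_arch_pow[OF t1] by blast
    have "K \<le> 2^(Suc K)" using less_exp[of K] by (simp only: power_Suc)
    hence "t^K \<le> t^(2^(Suc K))" using t1 by (intro power_increasing) auto
    hence "N2 * t^K \<le> f (Suc K)" using grow[of K] N2p
      by (meson dual_order.trans mult_le_cancel_left_pos)
    moreover have "c0 * S^2 < N2 * t^K" using K N2p by (simp add: field_simps)
    ultimately show False using fb[of "Suc K"] by simp
  qed
qed

lemma eig_real:
  fixes B :: "real mat"
  assumes B: "B \<in> carrier_mat n n" and s: "transpose_mat B = B" and n: "n > 0"
  shows "\<exists>a b. a \<in> carrier_vec n \<and> b \<in> carrier_vec n \<and> a \<bullet> a + b \<bullet> b > 0 \<and>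
     spectral_radius (map_mat complex_of_real B) * (a \<bullet> a + b \<bullet> b) = \<bar>a \<bullet> (B *\<^sub>v a) + b \<bullet> (B *\<^sub>v b)\<bar>"
proof -
  define A where "A = map_mat complex_of_real B"
  have A: "A \<in> carrier_mat n n" using B unfolding A_def by simp
  from spectral_radius_mem_max(1)[OF A n] obtain lam where
    lam: "lam \<in> spectrum A" and eq: "spectral_radius A = norm lam" by auto
  from lam obtain v where "eigenvector A v lam" unfolding spectrum_def eigenvalue_def by auto
  hence v: "v \<in> carrier_vec n" "v \<noteq> 0\<^sub>v n" and e: "A *\<^sub>v v = lam \<cdot>\<^sub>v v"
    unfolding eigenvector_def using A by auto
  define a where "a = vec n (\<lambda>i. Re (v$i))"
  define b where "b = vec n (\<lambda>i. Im (v$i))"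
  have a: "a \<in> carrier_vec n" and b: "b \<in> carrier_vec n" unfolding a_def b_def by auto
  define N where "N = a \<bullet> a + b \<bullet> b"
  have Ns: "N = (\<Sum>i<n. (Re (v$i))^2 + (Im (v$i))^2)"
    unfolding N_def a_def b_def scalar_prod_def
    by (simp add: power2_eq_square sum.distrib atLeast0LessThan)
  define L where "L = (\<Sum>i<n. cnj (v$i) * (A *\<^sub>v v)$i)"
  have L1: "L = lam * complex_of_real N"
  proof -
    have "L = (\<Sum>i<n. lam * (v$i * cnj (v$i)))" unfolding L_def e using v
      by (intro sum.cong, auto)
    also have "\<dots> = lam * complex_of_real N" unfolding Ns complex_mult_cnj
      by (simp add: sum_distrib_left[symmetric] sum.distrib)
    finally show ?thesis .
  qed
  have Av: "(A *\<^sub>v v)$i = (\<Sum>j<n. complex_of_real (B$$(i,j)) * v$j)" if "i < n" for i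
    unfolding mv_sum[OF A v(1) that] using that B unfolding A_def by (intro sum.cong, auto)
  have L2: "L = (\<Sum>i<n. \<Sum>j<n. cnj (v$i) * (complex_of_real (B$$(i,j)) * v$j))"
    unfolding L_def by (intro sum.cong, auto simp: Av sum_distrib_left)
  have ReL: "Re L = a \<bullet> (B *\<^sub>v a) + b \<bullet> (B *\<^sub>v b)"
  proof -
    have "Re L = (\<Sum>i<n. \<Sum>j<n. Re (v$i) * B$$(i,j) * Re (v$j) + Im (v$i) * B$$(i,j) * Im (v$j))"
      unfolding L2 Re_sum by (intro sum.cong refl, simp add: algebra_simps)
    also have "\<dots> = (\<Sum>i<n. \<Sum>j<n. a$i * B$$(i,j) * a$j) + (\<Sum>i<n. \<Sum>j<n. b$i * B$$(i,j) * b$j)"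
      unfolding sum.distrib[symmetric] a_def b_def by (intro sum.cong refl, simp)
    finally show ?thesis unfolding qf_sum[OF B a] qf_sum[OF B b] .
  qed
  have Bsym: "B$$(j,i) = B$$(i,j)" if "i < n" "j < n" for i j
  proof -
    have "transpose_mat B $$ (i,j) = B $$ (j,i)" using that B by simp
    thus ?thesis using s by simp
  qed
  have ImL: "Im L = 0"
  proof -
    have "Im L = (\<Sum>i<n. \<Sum>j<n. B$$(i,j) * (Re (v$i) * Im (v$j))) - (\<Sum>i<n. \<Sum>j<n. B$$(i,j) * (Im (v$i) * Re (v$j)))"
      unfolding L2 Im_sum sum_subtractf[symmetric] by (intro sum.cong refl, simp add: algebra_simps)
    also have "(\<Sum>i<n. \<Sum>j<n. B$$(i,j) * (Im (v$i) * Re (v$j))) = (\<Sum>j<n. \<Sum>i<n. B$$(i,j) * (Im (v$i) * Re (v$j)))"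
      by (rule sum.swap)
    also have "\<dots> = (\<Sum>i<n. \<Sum>j<n. B$$(i,j) * (Re (v$i) * Im (v$j)))"
      by (intro sum.cong refl, auto simp: Bsym mult_ac)
    finally show ?thesis by simp
  qed
  have Npos: "N > 0"
  proof -
    from v obtain i where i: "i < n" "v$i \<noteq> 0" by (metis carrier_vecD eq_vecI index_zero_vec(1,2))
    hence "(Re (v$i))^2 + (Im (v$i))^2 > 0" by (auto simp: sum_power2_gt_zero_iff complex_eq_iff)
    moreover have "(Re (v$i))^2 + (Im (v$i))^2 \<le> N" unfolding Ns
      by (rule member_le_sum, insert i, auto)
    ultimately show ?thesis by simp
  qed
  have "Im lam * N = 0" using ImL L1 by simp
  hence Il: "Im lam = 0" using Npos by simp
  have "Re L = Re lam * N" using L1 by simp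
  hence "norm lam * N = \<bar>Re L\<bar>" using Il Npos by (simp add: cmod_eq_Re abs_mult)
  thus ?thesis using a b Npos unfolding N_def A_def[symmetric] eq ReL by blast
qed

definition dg :: "nat \<Rightarrow> (nat \<Rightarrow> real) \<Rightarrow> real mat" where
  "dg n f = mat n n (\<lambda>(i,j). if i = j then f i else 0)"

lemma dg_carrier[simp]: "dg n f \<in> carrier_mat n n" and dg_dims[simp]: "dim_row (dg n f) = n" "dim_col (dg n f) = n"
  unfolding dg_def by auto

lemma dg_index[simp]: "i < n \<Longrightarrow> j < n \<Longrightarrow> dg n f $$ (i,j) = (if i = j then f i else 0)"
  unfolding dg_def by auto

definition itw :: "nat \<Rightarrow> nat \<Rightarrow> real" where
  "itw p i = (if i = 0 \<or> i = p - 1 then 1/2 else 1)"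

lemma Itil_dg: "Itil p = dg p (itw p)"
  unfolding Itil_def dg_def itw_def by (rule eq_matI, auto)

lemma one_dg: "1\<^sub>m n = (dg n (\<lambda>_. 1) :: real mat)"
  by (rule eq_matI, auto)

lemma smult_dg: "c \<cdot>\<^sub>m dg n f = dg n (\<lambda>i. c * f i)"
  by (rule eq_matI, auto)

lemma divmod_eq_iff: "((i::nat) = j) = (i div n = j div n \<and> i mod n = j mod n)"
  by (metis div_mult_mod_eq)

lemma kron_dg: "kron (dg m f) (dg n g) = dg (m*n) (\<lambda>r. f (r div n) * g (r mod n))"
proof (rule eq_matI)
  fix i j assume i: "i < dim_row (dg (m*n) (\<lambda>r. f (r div n) * g (r mod n)))"
    and j: "j < dim_col (dg (m*n) (\<lambda>r. f (r div n) * g (r mod n)))"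
  hence i': "i < m*n" and j': "j < m*n" by auto
  have n: "n > 0" using i' by (cases n) auto
  have "i div n < m" "j div n < m" using i' j' by (auto simp: less_mult_imp_div_less)
  moreover have "i mod n < n" "j mod n < n" using n by auto
  ultimately show "kron (dg m f) (dg n g) $$ (i,j) = dg (m*n) (\<lambda>r. f (r div n) * g (r mod n)) $$ (i,j)"
    using i' j' unfolding kron_def
    by (auto simp: divmod_eq_iff[of i j n])
qed (auto simp: kron_def)

definition bd3 :: "nat \<Rightarrow> nat \<Rightarrow> (nat \<Rightarrow> real) \<Rightarrow> (nat \<Rightarrow> real) \<Rightarrow> (nat \<Rightarrow> real) \<Rightarrow> nat \<Rightarrow> real" where
  "bd3 a b f g h i = (if i < a then f i else if i < a + b then g (i - a) else h (i - a - b))"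

lemma bdiag3_dg: "bdiag3 (dg a f) (dg b g) (dg c h) = dg (a+b+c) (bd3 a b f g h)"
proof (rule eq_matI)
  fix i j assume "i < dim_row (dg (a+b+c) (bd3 a b f g h))" "j < dim_col (dg (a+b+c) (bd3 a b f g h))"
  hence ij: "i < a+b+c" "j < a+b+c" by auto
  show "bdiag3 (dg a f) (dg b g) (dg c h) $$ (i,j) = dg (a+b+c) (bd3 a b f g h) $$ (i,j)"
    unfolding bdiag3_def Let_def dg_dims using ij
    by (cases "i < a"; cases "j < a"; cases "i < a + b"; cases "j < a + b"; auto simp: bd3_def)
qed (auto simp: bdiag3_def Let_def)

lemma dg_mult: "dg n f * dg n g = dg n (\<lambda>i. f i * g i)"
proof (rule eq_matI)
  fix i j assume "i < dim_row (dg n (\<lambda>i. f i * g i))" "j < dim_col (dg n (\<lambda>i. f i * g i))"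
  hence ij: "i < n" "j < n" by auto
  have "(dg n f * dg n g) $$ (i,j) = (\<Sum>k<n. dg n f $$ (i,k) * dg n g $$ (k,j))"
    using ij by (simp add: scalar_prod_def row_def col_def atLeast0LessThan)
  also have "\<dots> = (\<Sum>k<n. if k = i then (if i = j then f i * g i else 0) else 0)"
    using ij by (intro sum.cong, auto)
  also have "\<dots> = dg n (\<lambda>i. f i * g i) $$ (i,j)" using ij by simp
  finally show "(dg n f * dg n g) $$ (i,j) = dg n (\<lambda>i. f i * g i) $$ (i,j)" .
qed auto

lemma dg_transpose: "transpose_mat (dg n f) = dg n f"
  by (rule eq_matI, auto)

lemma dis_dg: "diag_inv_sqrt (dg n f) = dg n (\<lambda>i. 1 / sqrt (f i))"
  unfolding diag_inv_sqrt_def by (rule eq_matI, auto)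

lemma dg_mult_left: "M \<in> carrier_mat n m \<Longrightarrow> i < n \<Longrightarrow> j < m \<Longrightarrow> (dg n f * M) $$ (i,j) = f i * M $$ (i,j)"
proof -
  assume M: "M \<in> carrier_mat n m" and ij: "i < n" "j < m"
  have "(dg n f * M) $$ (i,j) = (\<Sum>k<n. dg n f $$ (i,k) * M $$ (k,j))"
    using ij M by (simp add: scalar_prod_def row_def col_def atLeast0LessThan)
  also have "\<dots> = (\<Sum>k<n. if k = i then f i * M $$ (i,j) else 0)"
    using ij by (intro sum.cong, auto)
  finally show ?thesis using ij by simp
qed

lemma dg_mult_right: "M \<in> carrier_mat m n \<Longrightarrow> i < m \<Longrightarrow> j < n \<Longrightarrow> (M * dg n f) $$ (i,j) = M $$ (i,j) * f j"
proof -
  assume M: "M \<in> carrier_mat m n" and ij: "i < m" "j < n"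
  have "(M * dg n f) $$ (i,j) = (\<Sum>k<n. M $$ (i,k) * dg n f $$ (k,j))"
    using ij M by (simp add: scalar_prod_def row_def col_def atLeast0LessThan)
  also have "\<dots> = (\<Sum>k<n. if k = j then M $$ (i,j) * f j else 0)"
    using ij by (intro sum.cong, auto)
  finally show ?thesis using ij by simp
qed

lemma idx_less: "i1 < m1 \<Longrightarrow> i2 < m2 \<Longrightarrow> i1*m2 + i2 < m1*(m2::nat)"
proof -
  assume a: "i1 < m1" "i2 < m2"
  have "i1*m2 + i2 < i1*m2 + m2" using a by simp
  also have "\<dots> = (i1+1)*m2" by simp
  also have "\<dots> \<le> m1*m2" using a by (intro mult_le_mono1) simp
  finally show ?thesis .
qed

lemma kron_index:
  assumes A: "A \<in> carrier_mat m1 n1" and B: "B \<in> carrier_mat m2 n2"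
    and "i1 < m1" "i2 < m2" "j1 < n1" "j2 < n2"
  shows "kron A B $$ (i1 * m2 + i2, j1 * n2 + j2) = A $$ (i1,j1) * B $$ (i2,j2)"
proof -
  have "i1 * m2 + i2 < m1 * m2" "j1 * n2 + j2 < n1 * n2" using assms by (auto intro: idx_less)
  thus ?thesis using assms unfolding kron_def by auto
qed

lemma kron_carrier: "A \<in> carrier_mat m1 n1 \<Longrightarrow> B \<in> carrier_mat m2 n2 \<Longrightarrow> kron A B \<in> carrier_mat (m1*m2) (n1*n2)"
  unfolding kron_def by auto

lemma sum_add_split:
  fixes f :: "nat \<Rightarrow> 'a::comm_monoid_add"
  shows "(\<Sum>r<p+q. f r) = (\<Sum>r<p. f r) + (\<Sum>s<q. f (p + s))"
proof (induct q)
  case 0 then show ?case by simp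
next
  case (Suc q) then show ?case by (simp add: add_Suc_right add.assoc)
qed

lemma sum_mult_reindex:
  fixes f :: "nat \<Rightarrow> 'a::comm_monoid_add"
  shows "(\<Sum>r<m*n. f r) = (\<Sum>q<m. \<Sum>s<n. f (q*n + s))"
proof (induct m)
  case 0 then show ?case by simp
next
  case (Suc m)
  have "(\<Sum>r<Suc m * n. f r) = (\<Sum>r<m*n + n. f r)" by (simp add: add.commute)
  also have "\<dots> = (\<Sum>r<m*n. f r) + (\<Sum>s<n. f (m*n + s))" by (rule sum_add_split)
  finally show ?case using Suc by simp
qed

lemma qf_gen:
  assumes D: "D \<in> carrier_mat N E" and y: "y \<in> carrier_vec N"
  shows "y \<bullet> ((c \<cdot>\<^sub>m (D * dg E g * transpose_mat D) + dg N p) *\<^sub>v y)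
       = c * (\<Sum>e<E. g e * (\<Sum>r<N. D $$ (r,e) * y$r)^2) + (\<Sum>r<N. p r * (y$r)^2)"
proof -
  define M where "M = c \<cdot>\<^sub>m (D * dg E g * transpose_mat D) + dg N p"
  have M: "M \<in> carrier_mat N N" unfolding M_def using D by auto
  have Me: "M $$ (i,j) = c * (\<Sum>e<E. D$$(i,e) * g e * D$$(j,e)) + (if i = j then p i else 0)"
    if ij: "i < N" "j < N" for i j
  proof -
    have DG: "D * dg E g \<in> carrier_mat N E" using D by simp
    have "(D * dg E g * transpose_mat D) $$ (i,j) = row (D * dg E g) i \<bullet> col (transpose_mat D) j"
      using D ij by simp
    also have "\<dots> = (\<Sum>e<E. (D * dg E g) $$ (i,e) * D$$(j,e))"
      using D ij DG by (simp only: scalar_prod_def, simp add: atLeast0LessThan)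
    also have "\<dots> = (\<Sum>e<E. D$$(i,e) * g e * D$$(j,e))"
    proof (intro sum.cong refl)
      fix e assume "e \<in> {..<E}"
      hence e: "e < E" by simp
      have "(D * dg E g) $$ (i,e) = D$$(i,e) * g e" by (rule dg_mult_right[OF D ij(1) e])
      thus "(D * dg E g) $$ (i,e) * D$$(j,e) = D$$(i,e) * g e * D$$(j,e)" by simp
    qed
    finally show ?thesis unfolding M_def using D ij by simp
  qed
  have "y \<bullet> (M *\<^sub>v y) = (\<Sum>i<N. \<Sum>j<N. y$i * M$$(i,j) * y$j)" by (rule qf_sum[OF M y])
  also have "\<dots> = (\<Sum>i<N. \<Sum>j<N. c * (\<Sum>e<E. (D$$(i,e) * y$i) * g e * (D$$(j,e) * y$j)))
                  + (\<Sum>i<N. \<Sum>j<N. if i = j then p i * (y$i)^2 else 0)"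
    unfolding sum.distrib[symmetric]
    by (intro sum.cong refl, simp add: Me algebra_simps sum_distrib_left sum_distrib_right power2_eq_square)
  also have "(\<Sum>i<N. \<Sum>j<N. if i = j then p i * (y$i)^2 else 0) = (\<Sum>r<N. p r * (y$r)^2)"
    by simp
  also have "(\<Sum>i<N. \<Sum>j<N. c * (\<Sum>e<E. (D$$(i,e) * y$i) * g e * (D$$(j,e) * y$j)))
      = c * (\<Sum>e<E. g e * (\<Sum>r<N. D $$ (r,e) * y$r)^2)"
  proof -
    have "(\<Sum>i<N. \<Sum>j<N. c * (\<Sum>e<E. (D$$(i,e) * y$i) * g e * (D$$(j,e) * y$j)))
        = c * (\<Sum>i<N. \<Sum>j<N. \<Sum>e<E. (D$$(i,e) * y$i) * g e * (D$$(j,e) * y$j))"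
      by (simp add: sum_distrib_left)
    also have "(\<Sum>i<N. \<Sum>j<N. \<Sum>e<E. (D$$(i,e) * y$i) * g e * (D$$(j,e) * y$j))
        = (\<Sum>i<N. \<Sum>e<E. \<Sum>j<N. (D$$(i,e) * y$i) * g e * (D$$(j,e) * y$j))"
      by (intro sum.cong refl sum.swap)
    also have "\<dots> = (\<Sum>e<E. \<Sum>i<N. \<Sum>j<N. (D$$(i,e) * y$i) * g e * (D$$(j,e) * y$j))"
      by (rule sum.swap)
    also have "\<dots> = (\<Sum>e<E. g e * (\<Sum>r<N. D $$ (r,e) * y$r)^2)"
      by (intro sum.cong refl, simp add: power2_eq_square sum_distrib_left sum_distrib_right mult_ac)
    finally show ?thesis .
  qed
  finally show ?thesis unfolding M_def .
qed

lemma dg_cong: "(\<And>i. i < n \<Longrightarrow> f i = g i) \<Longrightarrow> dg n f = dg n g"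
  by (rule eq_matI, auto)

lemma divmod_lt: "(s::nat) < m \<Longrightarrow> (k*m + s) div m = k" "(s::nat) < m \<Longrightarrow> (k*m + s) mod m = s"
  by auto

lemma Hsym_entry:
  assumes D: "D \<in> carrier_mat N E" and ij: "i < N" "j < N"
  shows "(c \<cdot>\<^sub>m (D * dg E g * transpose_mat D) + dg N p) $$ (i,j) = (c \<cdot>\<^sub>m (D * dg E g * transpose_mat D) + dg N p) $$ (j,i)"
proof -
  have DG: "D * dg E g \<in> carrier_mat N E" using D by simp
  have e: "(D * dg E g * transpose_mat D) $$ (i,j) = (\<Sum>e<E. D$$(i,e) * g e * D$$(j,e))"
    if ij: "i < N" "j < N" for i j
  proof -
    have "(D * dg E g * transpose_mat D) $$ (i,j) = row (D * dg E g) i \<bullet> col (transpose_mat D) j"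
      using D ij by simp
    also have "\<dots> = (\<Sum>e<E. (D * dg E g) $$ (i,e) * D$$(j,e))"
      using D ij DG by (simp only: scalar_prod_def, simp add: atLeast0LessThan)
    also have "\<dots> = (\<Sum>e<E. D$$(i,e) * g e * D$$(j,e))"
    proof (intro sum.cong refl)
      fix e assume "e \<in> {..<E}"
      hence e: "e < E" by simp
      have "(D * dg E g) $$ (i,e) = D$$(i,e) * g e" by (rule dg_mult_right[OF D ij(1) e])
      thus "(D * dg E g) $$ (i,e) * D$$(j,e) = D$$(i,e) * g e * D$$(j,e)" by simp
    qed
    finally show ?thesis .
  qed
  show ?thesis using D ij by (simp add: e[OF ij] e[OF ij(2,1)] mult_ac)
qed

lemma KS:
  assumes P: "P \<in> carrier_mat c c'" and Q: "Q \<in> carrier_mat b b'" and R: "R \<in> carrier_mat a a'"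
    and k: "k < c'" and j: "j < b'" and i: "i < a'"
  shows "(\<Sum>r<c*(b*a). kron P (kron Q R) $$ (r, k*(b'*a') + (j*a'+i)) * f r)
       = (\<Sum>k'<c. P$$(k',k) * (\<Sum>j'<b. Q$$(j',j) * (\<Sum>i'<a. R$$(i',i) * f (k'*(b*a) + (j'*a+i')))))"
proof -
  have QR: "kron Q R \<in> carrier_mat (b*a) (b'*a')" by (rule kron_carrier[OF Q R])
  have ji: "j*a'+i < b'*a'" using j i by (rule idx_less)
  have "(\<Sum>r<c*(b*a). kron P (kron Q R) $$ (r, k*(b'*a') + (j*a'+i)) * f r)
      = (\<Sum>k'<c. \<Sum>s<b*a. kron P (kron Q R) $$ (k'*(b*a)+s, k*(b'*a') + (j*a'+i)) * f (k'*(b*a)+s))"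
    by (rule sum_mult_reindex)
  also have "\<dots> = (\<Sum>k'<c. \<Sum>s<b*a. P$$(k',k) * (kron Q R $$ (s, j*a'+i) * f (k'*(b*a)+s)))"
    by (intro sum.cong refl, simp add: kron_index[OF P QR _ _ k ji])
  also have "\<dots> = (\<Sum>k'<c. P$$(k',k) * (\<Sum>j'<b. \<Sum>i'<a. kron Q R $$ (j'*a+i', j*a'+i) * f (k'*(b*a)+(j'*a+i'))))"
    by (intro sum.cong refl, simp add: sum_distrib_left[symmetric] sum_mult_reindex)
  also have "\<dots> = (\<Sum>k'<c. P$$(k',k) * (\<Sum>j'<b. \<Sum>i'<a. (Q$$(j',j) * R$$(i',i)) * f (k'*(b*a)+(j'*a+i'))))"
    by (intro sum.cong refl arg_cong2[where f="(*)"], simp add: kron_index[OF Q R _ _ j i])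
  also have "\<dots> = (\<Sum>k'<c. P$$(k',k) * (\<Sum>j'<b. Q$$(j',j) * (\<Sum>i'<a. R$$(i',i) * f (k'*(b*a) + (j'*a+i')))))"
    by (simp add: sum_distrib_left mult.assoc)
  finally show ?thesis .
qed

lemma one_sum: "k < n \<Longrightarrow> (\<Sum>k'<n. (1\<^sub>m n :: real mat) $$ (k',k) * F k') = F k"
proof -
  assume k: "k < n"
  have "(\<Sum>k'<n. (1\<^sub>m n :: real mat) $$ (k',k) * F k') = (\<Sum>k'<n. if k' = k then F k else 0)"
    using k by (intro sum.cong) auto
  thus ?thesis using k by simp
qed

lemma W_sum: "i < p \<Longrightarrow> (\<Sum>i'<p+1. transpose_mat (Wm p) $$ (i',i) * F i') = F (i+1) - F i"
proof -
  assume i: "i < p"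
  have "(\<Sum>i'<p+1. transpose_mat (Wm p) $$ (i',i) * F i')
     = (\<Sum>i'<p+1. (if i' = i+1 then F i' else 0) - (if i' = i then F i' else 0))"
    using i by (intro sum.cong refl, auto simp: Wm_def)
  also have "\<dots> = F (i+1) - F i" using i by (simp add: sum_subtractf)
  finally show ?thesis .
qed

lemma enc_props:
  fixes a b i j k :: nat
  assumes i: "i < a" and j: "j < b"
  shows "(k*(b*a) + (j*a+i)) mod a = i" "((k*(b*a) + (j*a+i)) div a) mod b = j"
    "(k*(b*a) + (j*a+i)) div (a*b) = k" "(k*(b*a) + (j*a+i)) div (b*a) = k"
    "(k*(b*a) + (j*a+i)) mod (b*a) = j*a+i" "(j*a+i) div a = j" "(j*a+i) mod a = i"
proof -
  have e: "k*(b*a) + (j*a+i) = (k*b + j)*a + i" by (simp add: algebra_simps)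
  have ji: "j*a+i < b*a" using j i by (rule idx_less)
  show "(k*(b*a) + (j*a+i)) mod a = i" unfolding e using i by simp
  have "(k*(b*a) + (j*a+i)) div a = k*b + j" unfolding e using i by simp
  thus "((k*(b*a) + (j*a+i)) div a) mod b = j" using j by simp
  show "(k*(b*a) + (j*a+i)) div (b*a) = k" using divmod_lt(1)[OF ji, of k] .
  thus "(k*(b*a) + (j*a+i)) div (a*b) = k" by (simp add: mult.commute)
  show "(k*(b*a) + (j*a+i)) mod (b*a) = j*a+i" using divmod_lt(2)[OF ji, of k] .
  show "(j*a+i) div a = j" "(j*a+i) mod a = i" using i by simp_all
qed

lemma hcat3_carrier: "A \<in> carrier_mat n p \<Longrightarrow> B \<in> carrier_mat n q \<Longrightarrow> C \<in> carrier_mat n s \<Longrightarrow>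
  hcat3 A B C \<in> carrier_mat n (p+q+s)"
  unfolding hcat3_def by auto

lemma hcat3_index:
  assumes A: "A \<in> carrier_mat n p" and B: "B \<in> carrier_mat n q" and C: "C \<in> carrier_mat n s" and r: "r < n"
  shows "e < p \<Longrightarrow> hcat3 A B C $$ (r,e) = A$$(r,e)"
    "e < q \<Longrightarrow> hcat3 A B C $$ (r,p+e) = B$$(r,e)"
    "e < s \<Longrightarrow> hcat3 A B C $$ (r,p+q+e) = C$$(r,e)"
  using assms unfolding hcat3_def by auto

lemma Wm_carrier: "Wm p \<in> carrier_mat p (p+1)"
  unfolding Wm_def by auto

definition kinX :: "nat \<Rightarrow> nat \<Rightarrow> nat \<Rightarrow> real \<Rightarrow> real \<Rightarrow> real \<Rightarrow> (nat \<Rightarrow> nat \<Rightarrow> nat \<Rightarrow> real) \<Rightarrow> real" where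
  "kinX nx ny nz dx dy dz Y = (\<Sum>k<nz+1. \<Sum>j<ny+1. \<Sum>i<nx.
     dy*dz/dx * (itw (nz+1) k * itw (ny+1) j) * (Y (i+1) j k - Y i j k)^2)"
definition kinY :: "nat \<Rightarrow> nat \<Rightarrow> nat \<Rightarrow> real \<Rightarrow> real \<Rightarrow> real \<Rightarrow> (nat \<Rightarrow> nat \<Rightarrow> nat \<Rightarrow> real) \<Rightarrow> real" where
  "kinY nx ny nz dx dy dz Y = (\<Sum>k<nz+1. \<Sum>j<ny. \<Sum>i<nx+1.
     dx*dz/dy * (itw (nz+1) k * itw (nx+1) i) * (Y i (j+1) k - Y i j k)^2)"
definition kinZ :: "nat \<Rightarrow> nat \<Rightarrow> nat \<Rightarrow> real \<Rightarrow> real \<Rightarrow> real \<Rightarrow> (nat \<Rightarrow> nat \<Rightarrow> nat \<Rightarrow> real) \<Rightarrow> real" where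
  "kinZ nx ny nz dx dy dz Y = (\<Sum>k<nz. \<Sum>j<ny+1. \<Sum>i<nx+1.
     dx*dy/dz * (itw (ny+1) j * itw (nx+1) i) * (Y i j (k+1) - Y i j k)^2)"
definition potE :: "nat \<Rightarrow> nat \<Rightarrow> nat \<Rightarrow> real \<Rightarrow> real \<Rightarrow> real \<Rightarrow> (nat \<Rightarrow> nat \<Rightarrow> nat \<Rightarrow> real) \<Rightarrow> (nat \<Rightarrow> nat \<Rightarrow> nat \<Rightarrow> real) \<Rightarrow> real" where
  "potE nx ny nz dx dy dz U Y = (\<Sum>k<nz+1. \<Sum>j<ny+1. \<Sum>i<nx+1.
     dx*dy*dz*(itw (nz+1) k * (itw (ny+1) j * itw (nx+1) i)) * U (i+1) (j+1) (k+1) * (Y i j k)^2)"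
definition massE :: "nat \<Rightarrow> nat \<Rightarrow> nat \<Rightarrow> real \<Rightarrow> real \<Rightarrow> real \<Rightarrow> (nat \<Rightarrow> nat \<Rightarrow> nat \<Rightarrow> real) \<Rightarrow> real" where
  "massE nx ny nz dx dy dz Y = (\<Sum>k<nz+1. \<Sum>j<ny+1. \<Sum>i<nx+1.
     dx*dy*dz*(itw (nz+1) k * (itw (ny+1) j * itw (nx+1) i)) * (Y i j k)^2)"

definition dvf :: "real \<Rightarrow> real \<Rightarrow> real \<Rightarrow> nat \<Rightarrow> nat \<Rightarrow> nat \<Rightarrow> nat \<Rightarrow> real" where
  "dvf dx dy dz nx ny nz r = dx*dy*dz * (itw (nz+1) (r div ((ny+1)*(nx+1))) *
      (itw (ny+1) (r mod ((ny+1)*(nx+1)) div (nx+1)) * itw (nx+1) (r mod ((ny+1)*(nx+1)) mod (nx+1))))"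

lemma DV_dg: "DV dx dy dz nx ny nz = dg ((nz+1)*((ny+1)*(nx+1))) (dvf dx dy dz nx ny nz)"
  unfolding DV_def Itil_dg kron_dg smult_dg dvf_def by simp

lemma dvf_enc: "i < nx+1 \<Longrightarrow> j < ny+1 \<Longrightarrow>
   dvf dx dy dz nx ny nz (k*((ny+1)*(nx+1)) + (j*(nx+1)+i)) = dx*dy*dz*(itw (nz+1) k * (itw (ny+1) j * itw (nx+1) i))"
  unfolding dvf_def using enc_props(1-5)[where a="nx+1" and b="ny+1" and i=i and j=j and k=k]
    enc_props(6,7)[where a="nx+1" and b="ny+1" and i=i and j=j] by (simp only:)

definition uf :: "nat \<Rightarrow> nat \<Rightarrow> (nat \<Rightarrow> nat \<Rightarrow> nat \<Rightarrow> real) \<Rightarrow> nat \<Rightarrow> real" where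
  "uf nx ny U r = U (r mod (nx+1) + 1) ((r div (nx+1)) mod (ny+1) + 1) (r div ((nx+1)*(ny+1)) + 1)"

lemma DU_dg: "DUm nx ny nz U = dg ((nz+1)*((ny+1)*(nx+1))) (uf nx ny U)"
proof -
  have N: "(nx+1)*(ny+1)*(nz+1) = (nz+1)*((ny+1)*(nx+1))" by (simp only: ac_simps)
  show ?thesis unfolding DUm_def Let_def N dg_def uf_def by simp
qed

lemma uf_enc: "i < nx+1 \<Longrightarrow> j < ny+1 \<Longrightarrow>
   uf nx ny U (k*((ny+1)*(nx+1)) + (j*(nx+1)+i)) = U (i+1) (j+1) (k+1)"
  unfolding uf_def using enc_props(1-5)[where a="nx+1" and b="ny+1" and i=i and j=j and k=k]
  by (simp only:)

definition gxf :: "real \<Rightarrow> real \<Rightarrow> real \<Rightarrow> nat \<Rightarrow> nat \<Rightarrow> nat \<Rightarrow> nat \<Rightarrow> real" where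
  "gxf dx dy dz nx ny nz r = dy*dz * (itw (nz+1) (r div ((ny+1)*nx)) * (itw (ny+1) (r mod ((ny+1)*nx) div nx) * 1))"
definition gyf :: "real \<Rightarrow> real \<Rightarrow> real \<Rightarrow> nat \<Rightarrow> nat \<Rightarrow> nat \<Rightarrow> nat \<Rightarrow> real" where
  "gyf dx dy dz nx ny nz r = dx*dz * (itw (nz+1) (r div (ny*(nx+1))) * (1 * itw (nx+1) (r mod (ny*(nx+1)) mod (nx+1))))"
definition gzf :: "real \<Rightarrow> real \<Rightarrow> real \<Rightarrow> nat \<Rightarrow> nat \<Rightarrow> nat \<Rightarrow> nat \<Rightarrow> real" where
  "gzf dx dy dz nx ny nz r = dx*dy * (1 * (itw (ny+1) (r mod ((ny+1)*(nx+1)) div (nx+1)) * itw (nx+1) (r mod ((ny+1)*(nx+1)) mod (nx+1))))"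

abbreviation "EXn nx ny nz \<equiv> (nz+1)*((ny+1)*nx)"
abbreviation "EYn nx ny nz \<equiv> (nz+1)*(ny*(nx+1))"
abbreviation "EZn nx ny nz \<equiv> nz*((ny+1)*(nx+1))"
abbreviation "NNn nx ny nz \<equiv> (nz+1)*((ny+1)*(nx+1))"

lemma DS_dg: "DS dx dy dz nx ny nz = dg (EXn nx ny nz + EYn nx ny nz + EZn nx ny nz)
   (bd3 (EXn nx ny nz) (EYn nx ny nz) (gxf dx dy dz nx ny nz) (gyf dx dy dz nx ny nz) (gzf dx dy dz nx ny nz))"
  unfolding DS_def Itil_dg one_dg kron_dg smult_dg bdiag3_dg gxf_def gyf_def gzf_def by (rule refl)

lemma Dl_dg: "Dl_inv dx dy dz nx ny nz = dg (EXn nx ny nz + EYn nx ny nz + EZn nx ny nz)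
   (bd3 (EXn nx ny nz) (EYn nx ny nz) (\<lambda>_. 1/dx) (\<lambda>_. 1/dy) (\<lambda>_. 1/dz))"
proof -
  have e1: "nx*(ny+1)*(nz+1) = EXn nx ny nz" by (simp only: ac_simps)
  have e2: "(nx+1)*ny*(nz+1) = EYn nx ny nz" by (simp only: ac_simps)
  have e3: "(nx+1)*(ny+1)*nz = EZn nx ny nz" by (simp only: ac_simps)
  show ?thesis unfolding Dl_inv_def e1 e2 e3 one_dg smult_dg bdiag3_dg by simp
qed

definition GG :: "real \<Rightarrow> real \<Rightarrow> real \<Rightarrow> nat \<Rightarrow> nat \<Rightarrow> nat \<Rightarrow> nat \<Rightarrow> real" where
  "GG dx dy dz nx ny nz e = bd3 (EXn nx ny nz) (EYn nx ny nz) (gxf dx dy dz nx ny nz) (gyf dx dy dz nx ny nz) (gzf dx dy dz nx ny nz) e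
     * bd3 (EXn nx ny nz) (EYn nx ny nz) (\<lambda>_. 1/dx) (\<lambda>_. 1/dy) (\<lambda>_. 1/dz) e"

definition Kx :: "nat \<Rightarrow> nat \<Rightarrow> nat \<Rightarrow> real mat" where
  "Kx nx ny nz = kron (1\<^sub>m (nz+1)) (kron (1\<^sub>m (ny+1)) (transpose_mat (Wm nx)))"
definition Ky :: "nat \<Rightarrow> nat \<Rightarrow> nat \<Rightarrow> real mat" where
  "Ky nx ny nz = kron (1\<^sub>m (nz+1)) (kron (transpose_mat (Wm ny)) (1\<^sub>m (nx+1)))"
definition Kz :: "nat \<Rightarrow> nat \<Rightarrow> nat \<Rightarrow> real mat" where
  "Kz nx ny nz = kron (transpose_mat (Wm nz)) (kron (1\<^sub>m (ny+1)) (1\<^sub>m (nx+1)))"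

lemma WT_carrier: "transpose_mat (Wm p) \<in> carrier_mat (p+1) p"
  using Wm_carrier by simp

lemma Kx_carrier: "Kx nx ny nz \<in> carrier_mat (NNn nx ny nz) (EXn nx ny nz)"
  unfolding Kx_def by (intro kron_carrier one_carrier_mat WT_carrier)
lemma Ky_carrier: "Ky nx ny nz \<in> carrier_mat (NNn nx ny nz) (EYn nx ny nz)"
  unfolding Ky_def by (intro kron_carrier one_carrier_mat WT_carrier)
lemma Kz_carrier: "Kz nx ny nz \<in> carrier_mat (NNn nx ny nz) (EZn nx ny nz)"
  unfolding Kz_def by (intro kron_carrier one_carrier_mat WT_carrier)

lemma Dmat_eq: "Dmat nx ny nz = hcat3 (- Kx nx ny nz) (- Ky nx ny nz) (- Kz nx ny nz)"
  unfolding Dmat_def Kx_def Ky_def Kz_def ..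

lemma Dmat_carrier: "Dmat nx ny nz \<in> carrier_mat (NNn nx ny nz) (EXn nx ny nz + EYn nx ny nz + EZn nx ny nz)"
  unfolding Dmat_eq by (intro hcat3_carrier uminus_carrier_mat Kx_carrier Ky_carrier Kz_carrier)

lemma H_rep: "Hmat hbar m dx dy dz nx ny nz U =
   (hbar^2/(2*m)) \<cdot>\<^sub>m (Dmat nx ny nz * dg (EXn nx ny nz + EYn nx ny nz + EZn nx ny nz) (GG dx dy dz nx ny nz) * transpose_mat (Dmat nx ny nz))
   + dg (NNn nx ny nz) (\<lambda>r. dvf dx dy dz nx ny nz r * uf nx ny U r)"
proof -
  have "Dmat nx ny nz * DS dx dy dz nx ny nz * Dl_inv dx dy dz nx ny nz
      = Dmat nx ny nz * (DS dx dy dz nx ny nz * Dl_inv dx dy dz nx ny nz)"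
    unfolding DS_dg Dl_dg by (rule assoc_mult_mat[OF Dmat_carrier dg_carrier dg_carrier])
  also have "DS dx dy dz nx ny nz * Dl_inv dx dy dz nx ny nz = dg (EXn nx ny nz + EYn nx ny nz + EZn nx ny nz) (GG dx dy dz nx ny nz)"
    unfolding DS_dg Dl_dg dg_mult GG_def ..
  finally have e: "Dmat nx ny nz * DS dx dy dz nx ny nz * Dl_inv dx dy dz nx ny nz = Dmat nx ny nz * dg (EXn nx ny nz + EYn nx ny nz + EZn nx ny nz) (GG dx dy dz nx ny nz)" .
  show ?thesis unfolding Hmat_def e DV_dg DU_dg dg_mult ..
qed

lemma Dsum_x:
  assumes y: "y \<in> carrier_vec (NNn nx ny nz)" and k: "k < nz+1" and j: "j < ny+1" and i: "i < nx"
  defines "e \<equiv> k*((ny+1)*nx) + (j*nx+i)"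
  shows "(\<Sum>r<NNn nx ny nz. Dmat nx ny nz $$ (r,e) * y$r)
     = - (y$(k*((ny+1)*(nx+1)) + (j*(nx+1)+(i+1))) - y$(k*((ny+1)*(nx+1)) + (j*(nx+1)+i)))"
proof -
  have e: "e < EXn nx ny nz" unfolding e_def using idx_less[OF j i] idx_less[OF k, of "j*nx+i" "(ny+1)*nx"] by simp
  have "(\<Sum>r<NNn nx ny nz. Dmat nx ny nz $$ (r,e) * y$r) = (\<Sum>r<NNn nx ny nz. - (Kx nx ny nz $$ (r,e) * y$r))"
    using e unfolding Dmat_eq
    by (intro sum.cong refl, simp add: hcat3_index(1)[OF uminus_carrier_mat[OF Kx_carrier] uminus_carrier_mat[OF Ky_carrier] uminus_carrier_mat[OF Kz_carrier]] Kx_carrier[THEN carrier_matD(1)] Kx_carrier[THEN carrier_matD(2)])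
  also have "\<dots> = - (\<Sum>r<NNn nx ny nz. Kx nx ny nz $$ (r,e) * y$r)" by (simp add: sum_negf)
  also have "(\<Sum>r<NNn nx ny nz. Kx nx ny nz $$ (r,e) * y$r)
     = (\<Sum>k'<nz+1. (1\<^sub>m (nz+1)) $$ (k',k) * (\<Sum>j'<ny+1. (1\<^sub>m (ny+1)) $$ (j',j) * (\<Sum>i'<nx+1. transpose_mat (Wm nx) $$ (i',i) * y$(k'*((ny+1)*(nx+1)) + (j'*(nx+1)+i')))))"
    unfolding Kx_def e_def by (rule KS[OF one_carrier_mat one_carrier_mat WT_carrier k j i])
  also have "\<dots> = y$(k*((ny+1)*(nx+1)) + (j*(nx+1)+(i+1))) - y$(k*((ny+1)*(nx+1)) + (j*(nx+1)+i))"
    by (simp only: one_sum[OF k] one_sum[OF j] W_sum[OF i])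
  finally show ?thesis .
qed

lemma Dsum_y:
  assumes y: "y \<in> carrier_vec (NNn nx ny nz)" and k: "k < nz+1" and j: "j < ny" and i: "i < nx+1"
  defines "e \<equiv> k*(ny*(nx+1)) + (j*(nx+1)+i)"
  shows "(\<Sum>r<NNn nx ny nz. Dmat nx ny nz $$ (r,EXn nx ny nz + e) * y$r)
     = - (y$(k*((ny+1)*(nx+1)) + ((j+1)*(nx+1)+i)) - y$(k*((ny+1)*(nx+1)) + (j*(nx+1)+i)))"
proof -
  have e: "e < EYn nx ny nz" unfolding e_def using idx_less[OF j i] idx_less[OF k, of "j*(nx+1)+i" "ny*(nx+1)"] by simp
  have "(\<Sum>r<NNn nx ny nz. Dmat nx ny nz $$ (r,EXn nx ny nz + e) * y$r) = (\<Sum>r<NNn nx ny nz. - (Ky nx ny nz $$ (r,e) * y$r))"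
    using e unfolding Dmat_eq
  proof (intro sum.cong refl)
    fix r assume "r \<in> {..<NNn nx ny nz}"
    hence r: "r < NNn nx ny nz" by simp
    have "hcat3 (- Kx nx ny nz) (- Ky nx ny nz) (- Kz nx ny nz) $$ (r, EXn nx ny nz + e) = (- Ky nx ny nz) $$ (r,e)"
      by (rule hcat3_index(2)[OF uminus_carrier_mat[OF Kx_carrier] uminus_carrier_mat[OF Ky_carrier] uminus_carrier_mat[OF Kz_carrier] r e])
    also have "\<dots> = - (Ky nx ny nz $$ (r,e))"
      by (metis index_uminus_mat(1) carrier_matD(1,2) Ky_carrier r e)
    finally show "hcat3 (- Kx nx ny nz) (- Ky nx ny nz) (- Kz nx ny nz) $$ (r, EXn nx ny nz + e) * y$r = - (Ky nx ny nz $$ (r,e) * y$r)" by simp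
  qed
  also have "\<dots> = - (\<Sum>r<NNn nx ny nz. Ky nx ny nz $$ (r,e) * y$r)" by (simp add: sum_negf)
  also have "(\<Sum>r<NNn nx ny nz. Ky nx ny nz $$ (r,e) * y$r)
     = (\<Sum>k'<nz+1. (1\<^sub>m (nz+1)) $$ (k',k) * (\<Sum>j'<ny+1. transpose_mat (Wm ny) $$ (j',j) * (\<Sum>i'<nx+1. (1\<^sub>m (nx+1)) $$ (i',i) * y$(k'*((ny+1)*(nx+1)) + (j'*(nx+1)+i')))))"
    unfolding Ky_def e_def by (rule KS[OF one_carrier_mat WT_carrier one_carrier_mat k j i])
  also have "\<dots> = y$(k*((ny+1)*(nx+1)) + ((j+1)*(nx+1)+i)) - y$(k*((ny+1)*(nx+1)) + (j*(nx+1)+i))"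
    by (simp only: one_sum[OF k] one_sum[OF i] W_sum[OF j])
  finally show ?thesis .
qed

lemma Dsum_z:
  assumes y: "y \<in> carrier_vec (NNn nx ny nz)" and k: "k < nz" and j: "j < ny+1" and i: "i < nx+1"
  defines "e \<equiv> k*((ny+1)*(nx+1)) + (j*(nx+1)+i)"
  shows "(\<Sum>r<NNn nx ny nz. Dmat nx ny nz $$ (r,EXn nx ny nz + EYn nx ny nz + e) * y$r)
     = - (y$((k+1)*((ny+1)*(nx+1)) + (j*(nx+1)+i)) - y$(k*((ny+1)*(nx+1)) + (j*(nx+1)+i)))"
proof -
  have e: "e < EZn nx ny nz" unfolding e_def using idx_less[OF j i] idx_less[OF k, of "j*(nx+1)+i" "(ny+1)*(nx+1)"] by simp
  have "(\<Sum>r<NNn nx ny nz. Dmat nx ny nz $$ (r,EXn nx ny nz + EYn nx ny nz + e) * y$r) = (\<Sum>r<NNn nx ny nz. - (Kz nx ny nz $$ (r,e) * y$r))"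
    using e unfolding Dmat_eq
  proof (intro sum.cong refl)
    fix r assume "r \<in> {..<NNn nx ny nz}"
    hence r: "r < NNn nx ny nz" by simp
    have "hcat3 (- Kx nx ny nz) (- Ky nx ny nz) (- Kz nx ny nz) $$ (r, EXn nx ny nz + EYn nx ny nz + e) = (- Kz nx ny nz) $$ (r,e)"
      by (rule hcat3_index(3)[OF uminus_carrier_mat[OF Kx_carrier] uminus_carrier_mat[OF Ky_carrier] uminus_carrier_mat[OF Kz_carrier] r e])
    also have "\<dots> = - (Kz nx ny nz $$ (r,e))"
      by (metis index_uminus_mat(1) carrier_matD(1,2) Kz_carrier r e)
    finally show "hcat3 (- Kx nx ny nz) (- Ky nx ny nz) (- Kz nx ny nz) $$ (r, EXn nx ny nz + EYn nx ny nz + e) * y$r = - (Kz nx ny nz $$ (r,e) * y$r)" by simp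
  qed
  also have "\<dots> = - (\<Sum>r<NNn nx ny nz. Kz nx ny nz $$ (r,e) * y$r)" by (simp add: sum_negf)
  also have "(\<Sum>r<NNn nx ny nz. Kz nx ny nz $$ (r,e) * y$r)
     = (\<Sum>k'<nz+1. transpose_mat (Wm nz) $$ (k',k) * (\<Sum>j'<ny+1. (1\<^sub>m (ny+1)) $$ (j',j) * (\<Sum>i'<nx+1. (1\<^sub>m (nx+1)) $$ (i',i) * y$(k'*((ny+1)*(nx+1)) + (j'*(nx+1)+i')))))"
    unfolding Kz_def e_def by (rule KS[OF WT_carrier one_carrier_mat one_carrier_mat k j i])
  also have "\<dots> = y$((k+1)*((ny+1)*(nx+1)) + (j*(nx+1)+i)) - y$(k*((ny+1)*(nx+1)) + (j*(nx+1)+i))"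
    by (simp only: W_sum[OF k] one_sum[OF j] one_sum[OF i])
  finally show ?thesis .
qed

lemma GG_x: "e < EXn nx ny nz \<Longrightarrow> GG dx dy dz nx ny nz e = gxf dx dy dz nx ny nz e * (1/dx)"
  unfolding GG_def bd3_def by simp
lemma GG_y: "e < EYn nx ny nz \<Longrightarrow> GG dx dy dz nx ny nz (EXn nx ny nz + e) = gyf dx dy dz nx ny nz e * (1/dy)"
  unfolding GG_def bd3_def by simp
lemma GG_z: "GG dx dy dz nx ny nz (EXn nx ny nz + EYn nx ny nz + e) = gzf dx dy dz nx ny nz e * (1/dz)"
  unfolding GG_def bd3_def by simp

lemma gxf_enc: "i < nx \<Longrightarrow> j < ny+1 \<Longrightarrow>
   gxf dx dy dz nx ny nz (k*((ny+1)*nx) + (j*nx+i)) = dy*dz*(itw (nz+1) k * itw (ny+1) j)"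
  unfolding gxf_def using enc_props(4,5)[where a="nx" and b="ny+1" and i=i and j=j and k=k]
    enc_props(6)[where a="nx" and b="ny+1" and i=i and j=j] by simp
lemma gyf_enc: "i < nx+1 \<Longrightarrow> j < ny \<Longrightarrow>
   gyf dx dy dz nx ny nz (k*(ny*(nx+1)) + (j*(nx+1)+i)) = dx*dz*(itw (nz+1) k * itw (nx+1) i)"
  unfolding gyf_def using enc_props(4,5)[where a="nx+1" and b="ny" and i=i and j=j and k=k]
    enc_props(7)[where a="nx+1" and b="ny" and i=i and j=j] by simp
lemma gzf_enc: "i < nx+1 \<Longrightarrow> j < ny+1 \<Longrightarrow>
   gzf dx dy dz nx ny nz (k*((ny+1)*(nx+1)) + (j*(nx+1)+i)) = dx*dy*(itw (ny+1) j * itw (nx+1) i)"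
  unfolding gzf_def using enc_props(5)[where a="nx+1" and b="ny+1" and i=i and j=j and k=k]
    enc_props(6,7)[where a="nx+1" and b="ny+1" and i=i and j=j] by (simp only: mult_1)

lemma H_quad:
  assumes y: "y \<in> carrier_vec (NNn nx ny nz)"
  defines "Y \<equiv> (\<lambda>i j k. y$(k*((ny+1)*(nx+1)) + (j*(nx+1)+i)))"
  shows "y \<bullet> (Hmat hbar m dx dy dz nx ny nz U *\<^sub>v y) = hbar^2/(2*m) *
     (kinX nx ny nz dx dy dz Y + kinY nx ny nz dx dy dz Y + kinZ nx ny nz dx dy dz Y) + potE nx ny nz dx dy dz U Y"
proof -
  define T where "T e = GG dx dy dz nx ny nz e * (\<Sum>r<NNn nx ny nz. Dmat nx ny nz $$ (r,e) * y$r)^2" for e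
  have q: "y \<bullet> (Hmat hbar m dx dy dz nx ny nz U *\<^sub>v y) = hbar^2/(2*m) * (\<Sum>e<EXn nx ny nz + EYn nx ny nz + EZn nx ny nz. T e)
      + (\<Sum>r<NNn nx ny nz. (dvf dx dy dz nx ny nz r * uf nx ny U r) * (y$r)^2)"
    unfolding H_rep T_def by (rule qf_gen[OF Dmat_carrier y])
  have split: "(\<Sum>e<EXn nx ny nz + EYn nx ny nz + EZn nx ny nz. T e) =
     (\<Sum>e<EXn nx ny nz. T e) + (\<Sum>e<EYn nx ny nz. T (EXn nx ny nz + e)) + (\<Sum>e<EZn nx ny nz. T (EXn nx ny nz + EYn nx ny nz + e))"
    by (simp only: sum_add_split)
  have sx: "(\<Sum>e<EXn nx ny nz. T e) = kinX nx ny nz dx dy dz Y"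
  proof -
    have "(\<Sum>e<EXn nx ny nz. T e) = (\<Sum>k<nz+1. \<Sum>j<ny+1. \<Sum>i<nx. T (k*((ny+1)*nx) + (j*nx+i)))"
      by (simp only: sum_mult_reindex)
    also have "\<dots> = kinX nx ny nz dx dy dz Y" unfolding kinX_def
    proof (intro sum.cong refl)
      fix k j i assume "k \<in> {..<nz+1}" "j \<in> {..<ny+1}" "i \<in> {..<nx}"
      hence k: "k < nz+1" and j: "j < ny+1" and i: "i < nx" by auto
      have e: "k*((ny+1)*nx) + (j*nx+i) < EXn nx ny nz"
        using idx_less[OF j i] idx_less[OF k, of "j*nx+i" "(ny+1)*nx"] by simp
      show "T (k*((ny+1)*nx) + (j*nx+i)) = dy*dz/dx * (itw (nz+1) k * itw (ny+1) j) * (Y (i+1) j k - Y i j k)^2"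
        unfolding T_def GG_x[OF e] gxf_enc[OF i j] Dsum_x[OF y k j i] Y_def power2_minus by simp
    qed
    finally show ?thesis .
  qed
  have sy: "(\<Sum>e<EYn nx ny nz. T (EXn nx ny nz + e)) = kinY nx ny nz dx dy dz Y"
  proof -
    have "(\<Sum>e<EYn nx ny nz. T (EXn nx ny nz + e)) = (\<Sum>k<nz+1. \<Sum>j<ny. \<Sum>i<nx+1. T (EXn nx ny nz + (k*(ny*(nx+1)) + (j*(nx+1)+i))))"
      by (simp only: sum_mult_reindex)
    also have "\<dots> = kinY nx ny nz dx dy dz Y" unfolding kinY_def
    proof (intro sum.cong refl)
      fix k j i assume "k \<in> {..<nz+1}" "j \<in> {..<ny}" "i \<in> {..<nx+1}"
      hence k: "k < nz+1" and j: "j < ny" and i: "i < nx+1" by auto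
      have e: "k*(ny*(nx+1)) + (j*(nx+1)+i) < EYn nx ny nz"
        using idx_less[OF j i] idx_less[OF k, of "j*(nx+1)+i" "ny*(nx+1)"] by simp
      show "T (EXn nx ny nz + (k*(ny*(nx+1)) + (j*(nx+1)+i))) = dx*dz/dy * (itw (nz+1) k * itw (nx+1) i) * (Y i (j+1) k - Y i j k)^2"
        unfolding T_def GG_y[OF e] gyf_enc[OF i j] Dsum_y[OF y k j i] Y_def power2_minus by simp
    qed
    finally show ?thesis .
  qed
  have sz: "(\<Sum>e<EZn nx ny nz. T (EXn nx ny nz + EYn nx ny nz + e)) = kinZ nx ny nz dx dy dz Y"
  proof -
    have "(\<Sum>e<EZn nx ny nz. T (EXn nx ny nz + EYn nx ny nz + e)) = (\<Sum>k<nz. \<Sum>j<ny+1. \<Sum>i<nx+1. T (EXn nx ny nz + EYn nx ny nz + (k*((ny+1)*(nx+1)) + (j*(nx+1)+i))))"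
      by (simp only: sum_mult_reindex)
    also have "\<dots> = kinZ nx ny nz dx dy dz Y" unfolding kinZ_def
    proof (intro sum.cong refl)
      fix k j i assume "k \<in> {..<nz}" "j \<in> {..<ny+1}" "i \<in> {..<nx+1}"
      hence k: "k < nz" and j: "j < ny+1" and i: "i < nx+1" by auto
      show "T (EXn nx ny nz + EYn nx ny nz + (k*((ny+1)*(nx+1)) + (j*(nx+1)+i))) = dx*dy/dz * (itw (ny+1) j * itw (nx+1) i) * (Y i j (k+1) - Y i j k)^2"
        unfolding T_def GG_z gzf_enc[OF i j] Dsum_z[OF y k j i] Y_def power2_minus by simp
    qed
    finally show ?thesis .
  qed
  have sp: "(\<Sum>r<NNn nx ny nz. (dvf dx dy dz nx ny nz r * uf nx ny U r) * (y$r)^2) = potE nx ny nz dx dy dz U Y"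
  proof -
    have "(\<Sum>r<NNn nx ny nz. (dvf dx dy dz nx ny nz r * uf nx ny U r) * (y$r)^2)
       = (\<Sum>k<nz+1. \<Sum>j<ny+1. \<Sum>i<nx+1. (\<lambda>r. (dvf dx dy dz nx ny nz r * uf nx ny U r) * (y$r)^2) (k*((ny+1)*(nx+1)) + (j*(nx+1)+i)))"
      by (simp only: sum_mult_reindex)
    also have "\<dots> = potE nx ny nz dx dy dz U Y" unfolding potE_def
    proof (intro sum.cong refl)
      fix k j i assume "k \<in> {..<nz+1}" "j \<in> {..<ny+1}" "i \<in> {..<nx+1}"
      hence k: "k < nz+1" and j: "j < ny+1" and i: "i < nx+1" by auto
      show "(\<lambda>r. (dvf dx dy dz nx ny nz r * uf nx ny U r) * (y$r)^2) (k*((ny+1)*(nx+1)) + (j*(nx+1)+i))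
         = dx*dy*dz*(itw (nz+1) k * (itw (ny+1) j * itw (nx+1) i)) * U (i+1) (j+1) (k+1) * (Y i j k)^2"
        unfolding dvf_enc[OF i j] uf_enc[OF i j] Y_def by simp
    qed
    finally show ?thesis .
  qed
  show ?thesis unfolding q split sx sy sz sp ..
qed

definition Bm :: "real \<Rightarrow> real \<Rightarrow> real \<Rightarrow> real \<Rightarrow> real \<Rightarrow> nat \<Rightarrow> nat \<Rightarrow> nat \<Rightarrow> (nat \<Rightarrow> nat \<Rightarrow> nat \<Rightarrow> real) \<Rightarrow> real mat" where
  "Bm hbar m dx dy dz nx ny nz U = (1/hbar) \<cdot>\<^sub>m (diag_inv_sqrt (DV dx dy dz nx ny nz) * Hmat hbar m dx dy dz nx ny nz U
                       * diag_inv_sqrt (DV dx dy dz nx ny nz))"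

lemma cfl_Bm: "cfl_gen hbar m dx dy dz nx ny nz U = 2 / spectral_radius (map_mat complex_of_real (Bm hbar m dx dy dz nx ny nz U))"
  unfolding cfl_gen_def Bm_def ..

lemma H_carrier: "Hmat hbar m dx dy dz nx ny nz U \<in> carrier_mat (NNn nx ny nz) (NNn nx ny nz)"
  unfolding H_rep using Dmat_carrier by (intro add_carrier_mat smult_carrier_mat mult_carrier_mat) auto

lemma S_dg: "diag_inv_sqrt (DV dx dy dz nx ny nz) = dg (NNn nx ny nz) (\<lambda>r. 1 / sqrt (dvf dx dy dz nx ny nz r))"
  unfolding DV_dg dis_dg ..

lemma B_carrier: "Bm hbar m dx dy dz nx ny nz U \<in> carrier_mat (NNn nx ny nz) (NNn nx ny nz)"
  unfolding Bm_def S_dg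
  by (rule smult_carrier_mat, rule mult_carrier_mat[OF mult_carrier_mat[OF dg_carrier H_carrier] dg_carrier])

lemma B_entry:
  assumes ij: "i < NNn nx ny nz" "j < NNn nx ny nz"
  shows "Bm hbar m dx dy dz nx ny nz U $$ (i,j) = (1/hbar) * ((1 / sqrt (dvf dx dy dz nx ny nz i))
     * Hmat hbar m dx dy dz nx ny nz U $$ (i,j) * (1 / sqrt (dvf dx dy dz nx ny nz j)))"
proof -
  let ?S = "dg (NNn nx ny nz) (\<lambda>r. 1 / sqrt (dvf dx dy dz nx ny nz r))"
  let ?H = "Hmat hbar m dx dy dz nx ny nz U"
  have SH: "?S * ?H \<in> carrier_mat (NNn nx ny nz) (NNn nx ny nz)" by (rule mult_carrier_mat[OF dg_carrier H_carrier])
  have "(?S * ?H * ?S) $$ (i,j) = (?S * ?H) $$ (i,j) * (1 / sqrt (dvf dx dy dz nx ny nz j))"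
    by (rule dg_mult_right[OF SH ij])
  also have "(?S * ?H) $$ (i,j) = (1 / sqrt (dvf dx dy dz nx ny nz i)) * ?H $$ (i,j)"
    by (rule dg_mult_left[OF H_carrier ij])
  finally show ?thesis unfolding Bm_def S_dg using ij H_carrier SH by simp
qed

lemma H_sym_entry: "i < NNn nx ny nz \<Longrightarrow> j < NNn nx ny nz \<Longrightarrow>
  Hmat hbar m dx dy dz nx ny nz U $$ (i,j) = Hmat hbar m dx dy dz nx ny nz U $$ (j,i)"
  unfolding H_rep by (rule Hsym_entry[OF Dmat_carrier])

lemma B_sym: "transpose_mat (Bm hbar m dx dy dz nx ny nz U) = Bm hbar m dx dy dz nx ny nz U"
proof (rule eq_matI)
  fix i j assume "i < dim_row (Bm hbar m dx dy dz nx ny nz U)" "j < dim_col (Bm hbar m dx dy dz nx ny nz U)"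
  hence ij: "i < NNn nx ny nz" "j < NNn nx ny nz" using carrier_matD[OF B_carrier[of hbar m dx dy dz nx ny nz U]] by auto
  show "transpose_mat (Bm hbar m dx dy dz nx ny nz U) $$ (i,j) = Bm hbar m dx dy dz nx ny nz U $$ (i,j)"
    using ij carrier_matD[OF B_carrier[of hbar m dx dy dz nx ny nz U]] B_entry[OF ij] B_entry[OF ij(2,1)] H_sym_entry[OF ij] by (simp add: mult_ac)
qed (insert carrier_matD[OF B_carrier[of hbar m dx dy dz nx ny nz U]], auto)

lemma itw_pos: "itw p i > 0" unfolding itw_def by simp

lemma dvf_pos: "dx > 0 \<Longrightarrow> dy > 0 \<Longrightarrow> dz > 0 \<Longrightarrow> dvf dx dy dz nx ny nz r > 0"
  unfolding dvf_def using itw_pos by simp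

definition agree :: "nat \<Rightarrow> nat \<Rightarrow> nat \<Rightarrow> (nat \<Rightarrow> nat \<Rightarrow> nat \<Rightarrow> real) \<Rightarrow> (nat \<Rightarrow> nat \<Rightarrow> nat \<Rightarrow> real) \<Rightarrow> bool" where
  "agree nx ny nz Y Y' = (\<forall>i j k. i \<le> nx \<longrightarrow> j \<le> ny \<longrightarrow> k \<le> nz \<longrightarrow> Y i j k = Y' i j k)"

lemma agree_cong:
  assumes "agree nx ny nz Y Y'"
  shows "kinX nx ny nz dx dy dz Y = kinX nx ny nz dx dy dz Y'"
    "kinY nx ny nz dx dy dz Y = kinY nx ny nz dx dy dz Y'"
    "kinZ nx ny nz dx dy dz Y = kinZ nx ny nz dx dy dz Y'"
    "potE nx ny nz dx dy dz U Y = potE nx ny nz dx dy dz U Y'"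
    "massE nx ny nz dx dy dz Y = massE nx ny nz dx dy dz Y'"
  using assms unfolding agree_def kinX_def kinY_def kinZ_def potE_def massE_def
  by (intro sum.cong refl; simp)+

lemma B_quad:
  assumes x: "x \<in> carrier_vec (NNn nx ny nz)" and d: "dx > 0" "dy > 0" "dz > 0"
  defines "Y \<equiv> (\<lambda>i j k. x$(k*((ny+1)*(nx+1)) + (j*(nx+1)+i)) / sqrt (dx*dy*dz*(itw (nz+1) k * (itw (ny+1) j * itw (nx+1) i))))"
  shows "x \<bullet> (Bm hbar m dx dy dz nx ny nz U *\<^sub>v x) = (1/hbar) * (hbar^2/(2*m) *
     (kinX nx ny nz dx dy dz Y + kinY nx ny nz dx dy dz Y + kinZ nx ny nz dx dy dz Y) + potE nx ny nz dx dy dz U Y)"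
    and "x \<bullet> x = massE nx ny nz dx dy dz Y"
proof -
  define y where "y = vec (NNn nx ny nz) (\<lambda>r. x$r / sqrt (dvf dx dy dz nx ny nz r))"
  have y: "y \<in> carrier_vec (NNn nx ny nz)" unfolding y_def by simp
  let ?H = "Hmat hbar m dx dy dz nx ny nz U"
  have "x \<bullet> (Bm hbar m dx dy dz nx ny nz U *\<^sub>v x) = (\<Sum>i<NNn nx ny nz. \<Sum>j<NNn nx ny nz. x$i * Bm hbar m dx dy dz nx ny nz U $$ (i,j) * x$j)"
    by (rule qf_sum[OF B_carrier x])
  also have "\<dots> = (1/hbar) * (\<Sum>i<NNn nx ny nz. \<Sum>j<NNn nx ny nz. y$i * ?H $$ (i,j) * y$j)"
    unfolding sum_distrib_left
    by (intro sum.cong refl, simp add: B_entry y_def)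
  also have "(\<Sum>i<NNn nx ny nz. \<Sum>j<NNn nx ny nz. y$i * ?H $$ (i,j) * y$j) = y \<bullet> (?H *\<^sub>v y)"
    by (rule qf_sum[OF H_carrier y, symmetric])
  also have "\<dots> = hbar^2/(2*m) * (kinX nx ny nz dx dy dz Y + kinY nx ny nz dx dy dz Y + kinZ nx ny nz dx dy dz Y) + potE nx ny nz dx dy dz U Y"
  proof -
    have "agree nx ny nz (\<lambda>i j k. y$(k*((ny+1)*(nx+1)) + (j*(nx+1)+i))) Y"
      unfolding agree_def
    proof (intro allI impI)
      fix i j k assume ijk: "i \<le> nx" "j \<le> ny" "k \<le> nz"
      have i: "i < nx+1" and j: "j < ny+1" and k: "k < nz+1" using ijk by auto
      have r: "k*((ny+1)*(nx+1)) + (j*(nx+1)+i) < NNn nx ny nz"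
        using idx_less[OF j i] idx_less[OF k, of "j*(nx+1)+i" "(ny+1)*(nx+1)"] by simp
      show "y$(k*((ny+1)*(nx+1)) + (j*(nx+1)+i)) = Y i j k"
        unfolding y_def Y_def using r dvf_enc[OF i j, of dx dy dz nz k] by simp
    qed
    thus ?thesis using H_quad[OF y] agree_cong by simp
  qed
  finally show "x \<bullet> (Bm hbar m dx dy dz nx ny nz U *\<^sub>v x) = (1/hbar) * (hbar^2/(2*m) *
     (kinX nx ny nz dx dy dz Y + kinY nx ny nz dx dy dz Y + kinZ nx ny nz dx dy dz Y) + potE nx ny nz dx dy dz U Y)" .
  have "x \<bullet> x = (\<Sum>r<NNn nx ny nz. (x$r)^2)" using sp_sum[OF x] by (simp add: power2_eq_square)
  also have "\<dots> = (\<Sum>k<nz+1. \<Sum>j<ny+1. \<Sum>i<nx+1. (x$(k*((ny+1)*(nx+1)) + (j*(nx+1)+i)))^2)"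
    by (simp only: sum_mult_reindex)
  also have "\<dots> = massE nx ny nz dx dy dz Y" unfolding massE_def
  proof (intro sum.cong refl)
    fix k j i assume "k \<in> {..<nz+1}" "j \<in> {..<ny+1}" "i \<in> {..<nx+1}"
    define dd where "dd = dx*dy*dz*(itw (nz+1) k * (itw (ny+1) j * itw (nx+1) i))"
    have dd: "dd > 0" unfolding dd_def using d itw_pos by simp
    have "dd * (x$(k*((ny+1)*(nx+1)) + (j*(nx+1)+i)) / sqrt dd)^2 = (x$(k*((ny+1)*(nx+1)) + (j*(nx+1)+i)))^2"
      using dd by (simp add: power_divide)
    thus "(x$(k*((ny+1)*(nx+1)) + (j*(nx+1)+i)))^2 = dx*dy*dz*(itw (nz+1) k * (itw (ny+1) j * itw (nx+1) i)) * (Y i j k)^2"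
      unfolding Y_def dd_def by simp
  qed
  finally show "x \<bullet> x = massE nx ny nz dx dy dz Y" .
qed

lemma itw2: "itw 2 0 = 1/2" "itw 2 1 = 1/2" "itw (1+1) 0 = 1/2" "itw (1+1) 1 = 1/2" unfolding itw_def by auto

lemma sum2: "(\<Sum>j<2. f j) = f 0 + f (1::nat)" "(\<Sum>j<1+1. f j) = f 0 + f (1::nat)" "(\<Sum>j<1. f j) = f (0::nat)"
  by (simp_all add: numeral_2_eq_2)

lemma L1D:
  fixes g :: "nat \<Rightarrow> real"
  assumes n: "n \<ge> 1"
  shows "(\<Sum>j<n+1. itw (n+1) j * g j) = (\<Sum>j0<n. g j0 / 2 + g (j0+1) / 2)"
proof -
  have "(\<Sum>j<n+1. itw (n+1) j * g j) = (\<Sum>j<n+1. (if j < n then g j / 2 else 0) + (if 1 \<le> j then g j / 2 else 0))"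
    using n by (intro sum.cong refl) (auto simp: itw_def)
  also have "\<dots> = (\<Sum>j<n+1. (if j < n then g j / 2 else 0)) + (\<Sum>j<n+1. (if 1 \<le> j then g j / 2 else 0))"
    by (rule sum.distrib)
  also have "(\<Sum>j<n+1. (if j < n then g j / 2 else 0)) = (\<Sum>j0<n. g j0 / 2)"
    by simp
  also have "(\<Sum>j<n+1. (if 1 \<le> j then g j / 2 else 0)) = (\<Sum>j0<n. g (j0+1) / 2)"
    by (simp only: Suc_eq_plus1[symmetric] sum.lessThan_Suc_shift) simp
  finally show ?thesis by (simp add: sum.distrib)
qed

lemma A1D:
  fixes g :: "nat \<Rightarrow> real"
  assumes n: "n \<ge> 1"
  shows "(\<Sum>j<n+1. itw (n+1) j * g j) = (\<Sum>j0<n. (g j0 + g (j0+1)) / 2)"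
  unfolding L1D[OF n] by (simp add: add_divide_distrib)

lemma sum_half: "(\<Sum>j\<in>A. (u j + v j) / (2::real)) = ((\<Sum>j\<in>A. u j) + (\<Sum>j\<in>A. v j)) / 2"
  by (simp only: sum_divide_distrib[symmetric] sum.distrib)

lemma sum_quarter: "(\<Sum>j\<in>A. (u j + v j + w j + x j) / (4::real)) = ((\<Sum>j\<in>A. u j) + (\<Sum>j\<in>A. v j) + (\<Sum>j\<in>A. w j) + (\<Sum>j\<in>A. x j)) / 4"
  by (simp only: sum_divide_distrib[symmetric] sum.distrib)

lemma A2D:
  fixes P :: "nat \<Rightarrow> nat \<Rightarrow> real"
  assumes a: "na \<ge> 1" and b: "nb \<ge> 1"
  shows "(\<Sum>k<nb+1. \<Sum>j<na+1. itw (nb+1) k * itw (na+1) j * P j k)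
    = (\<Sum>k0<nb. \<Sum>j0<na. (P j0 k0 + P (j0+1) k0 + P j0 (k0+1) + P (j0+1) (k0+1)) / 4)"
proof -
  have "(\<Sum>k<nb+1. \<Sum>j<na+1. itw (nb+1) k * itw (na+1) j * P j k)
      = (\<Sum>k<nb+1. itw (nb+1) k * (\<Sum>j<na+1. itw (na+1) j * P j k))"
    by (simp only: sum_distrib_left mult.assoc)
  also have "\<dots> = (\<Sum>k0<nb. ((\<Sum>j<na+1. itw (na+1) j * P j k0) + (\<Sum>j<na+1. itw (na+1) j * P j (k0+1))) / 2)"
    by (rule A1D[OF b])
  also have "\<dots> = (\<Sum>k0<nb. ((\<Sum>j0<na. (P j0 k0 + P (j0+1) k0) / 2) + (\<Sum>j0<na. (P j0 (k0+1) + P (j0+1) (k0+1)) / 2)) / 2)"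
    by (simp only: A1D[OF a])
  also have "\<dots> = (\<Sum>k0<nb. \<Sum>j0<na. (P j0 k0 + P (j0+1) k0 + P j0 (k0+1) + P (j0+1) (k0+1)) / 4)"
  proof (intro sum.cong refl)
    fix k0
    have "(\<Sum>j0<na. (P j0 k0 + P (j0+1) k0 + P j0 (k0+1) + P (j0+1) (k0+1)) / 4)
       = (\<Sum>j0<na. ((P j0 k0 + P (j0+1) k0) / 2 + (P j0 (k0+1) + P (j0+1) (k0+1)) / 2) / 2)"
      by (intro sum.cong refl) (simp add: add_divide_distrib divide_divide_eq_left add_ac)
    also have "\<dots> = ((\<Sum>j0<na. (P j0 k0 + P (j0+1) k0) / 2) + (\<Sum>j0<na. (P j0 (k0+1) + P (j0+1) (k0+1)) / 2)) / 2"
      by (rule sum_half)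
    finally show "((\<Sum>j0<na. (P j0 k0 + P (j0+1) k0) / 2) + (\<Sum>j0<na. (P j0 (k0+1) + P (j0+1) (k0+1)) / 2)) / 2
       = (\<Sum>j0<na. (P j0 k0 + P (j0+1) k0 + P j0 (k0+1) + P (j0+1) (k0+1)) / 4)" by simp
  qed
  finally show ?thesis .
qed

lemma A3D:
  fixes P :: "nat \<Rightarrow> nat \<Rightarrow> nat \<Rightarrow> real"
  assumes a: "na \<ge> 1" and b: "nb \<ge> 1" and c: "nc \<ge> 1"
  shows "(\<Sum>k<nc+1. \<Sum>j<nb+1. \<Sum>i<na+1. itw (nc+1) k * (itw (nb+1) j * itw (na+1) i) * P i j k)
    = (\<Sum>k0<nc. \<Sum>j0<nb. \<Sum>i0<na. (P i0 j0 k0 + P (i0+1) j0 k0 + P i0 (j0+1) k0 + P (i0+1) (j0+1) k0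
        + P i0 j0 (k0+1) + P (i0+1) j0 (k0+1) + P i0 (j0+1) (k0+1) + P (i0+1) (j0+1) (k0+1)) / 8)"
proof -
  have "(\<Sum>k<nc+1. \<Sum>j<nb+1. \<Sum>i<na+1. itw (nc+1) k * (itw (nb+1) j * itw (na+1) i) * P i j k)
      = (\<Sum>k<nc+1. \<Sum>j<nb+1. itw (nc+1) k * itw (nb+1) j * (\<Sum>i<na+1. itw (na+1) i * P i j k))"
    by (simp only: sum_distrib_left mult.assoc)
  also have "\<dots> = (\<Sum>k0<nc. \<Sum>j0<nb. ((\<Sum>i<na+1. itw (na+1) i * P i j0 k0) + (\<Sum>i<na+1. itw (na+1) i * P i (j0+1) k0)
      + (\<Sum>i<na+1. itw (na+1) i * P i j0 (k0+1)) + (\<Sum>i<na+1. itw (na+1) i * P i (j0+1) (k0+1))) / 4)"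
    by (rule A2D[OF b c])
  also have "\<dots> = (\<Sum>k0<nc. \<Sum>j0<nb. ((\<Sum>i0<na. (P i0 j0 k0 + P (i0+1) j0 k0) / 2) + (\<Sum>i0<na. (P i0 (j0+1) k0 + P (i0+1) (j0+1) k0) / 2)
      + (\<Sum>i0<na. (P i0 j0 (k0+1) + P (i0+1) j0 (k0+1)) / 2) + (\<Sum>i0<na. (P i0 (j0+1) (k0+1) + P (i0+1) (j0+1) (k0+1)) / 2)) / 4)"
    by (simp only: A1D[OF a])
  also have "\<dots> = (\<Sum>k0<nc. \<Sum>j0<nb. \<Sum>i0<na. (P i0 j0 k0 + P (i0+1) j0 k0 + P i0 (j0+1) k0 + P (i0+1) (j0+1) k0
        + P i0 j0 (k0+1) + P (i0+1) j0 (k0+1) + P i0 (j0+1) (k0+1) + P (i0+1) (j0+1) (k0+1)) / 8)"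
  proof (intro sum.cong refl)
    fix k0 j0
    have "(\<Sum>i0<na. (P i0 j0 k0 + P (i0+1) j0 k0 + P i0 (j0+1) k0 + P (i0+1) (j0+1) k0
        + P i0 j0 (k0+1) + P (i0+1) j0 (k0+1) + P i0 (j0+1) (k0+1) + P (i0+1) (j0+1) (k0+1)) / 8)
      = (\<Sum>i0<na. ((P i0 j0 k0 + P (i0+1) j0 k0) / 2 + (P i0 (j0+1) k0 + P (i0+1) (j0+1) k0) / 2
        + (P i0 j0 (k0+1) + P (i0+1) j0 (k0+1)) / 2 + (P i0 (j0+1) (k0+1) + P (i0+1) (j0+1) (k0+1)) / 2) / 4)"
      by (intro sum.cong refl) (simp add: add_divide_distrib divide_divide_eq_left add_ac)
    also have "\<dots> = ((\<Sum>i0<na. (P i0 j0 k0 + P (i0+1) j0 k0) / 2) + (\<Sum>i0<na. (P i0 (j0+1) k0 + P (i0+1) (j0+1) k0) / 2)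
      + (\<Sum>i0<na. (P i0 j0 (k0+1) + P (i0+1) j0 (k0+1)) / 2) + (\<Sum>i0<na. (P i0 (j0+1) (k0+1) + P (i0+1) (j0+1) (k0+1)) / 2)) / 4"
      by (rule sum_quarter)
    finally show "((\<Sum>i0<na. (P i0 j0 k0 + P (i0+1) j0 k0) / 2) + (\<Sum>i0<na. (P i0 (j0+1) k0 + P (i0+1) (j0+1) k0) / 2)
      + (\<Sum>i0<na. (P i0 j0 (k0+1) + P (i0+1) j0 (k0+1)) / 2) + (\<Sum>i0<na. (P i0 (j0+1) (k0+1) + P (i0+1) (j0+1) (k0+1)) / 2)) / 4
      = (\<Sum>i0<na. (P i0 j0 k0 + P (i0+1) j0 k0 + P i0 (j0+1) k0 + P (i0+1) (j0+1) k0
        + P i0 j0 (k0+1) + P (i0+1) j0 (k0+1) + P i0 (j0+1) (k0+1) + P (i0+1) (j0+1) (k0+1)) / 8)" by simp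
  qed
  finally show ?thesis .
qed

lemma cellX: "kinX 1 1 1 dx dy dz (\<lambda>a b c. Y (i0+a) (j0+b) (k0+c)) =
   (dy*dz/dx * (Y (i0+1) j0 k0 - Y i0 j0 k0)^2 + dy*dz/dx * (Y (i0+1) (j0+1) k0 - Y i0 (j0+1) k0)^2
  + dy*dz/dx * (Y (i0+1) j0 (k0+1) - Y i0 j0 (k0+1))^2 + dy*dz/dx * (Y (i0+1) (j0+1) (k0+1) - Y i0 (j0+1) (k0+1))^2) / 4"
  unfolding kinX_def by (simp add: itw_def numeral_2_eq_2 add_divide_distrib)

lemma cellY: "kinY 1 1 1 dx dy dz (\<lambda>a b c. Y (i0+a) (j0+b) (k0+c)) =
   (dx*dz/dy * (Y i0 (j0+1) k0 - Y i0 j0 k0)^2 + dx*dz/dy * (Y (i0+1) (j0+1) k0 - Y (i0+1) j0 k0)^2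
  + dx*dz/dy * (Y i0 (j0+1) (k0+1) - Y i0 j0 (k0+1))^2 + dx*dz/dy * (Y (i0+1) (j0+1) (k0+1) - Y (i0+1) j0 (k0+1))^2) / 4"
  unfolding kinY_def by (simp add: itw_def numeral_2_eq_2 add_divide_distrib)

lemma cellZ: "kinZ 1 1 1 dx dy dz (\<lambda>a b c. Y (i0+a) (j0+b) (k0+c)) =
   (dx*dy/dz * (Y i0 j0 (k0+1) - Y i0 j0 k0)^2 + dx*dy/dz * (Y (i0+1) j0 (k0+1) - Y (i0+1) j0 k0)^2
  + dx*dy/dz * (Y i0 (j0+1) (k0+1) - Y i0 (j0+1) k0)^2 + dx*dy/dz * (Y (i0+1) (j0+1) (k0+1) - Y (i0+1) (j0+1) k0)^2) / 4"
  unfolding kinZ_def by (simp add: itw_def numeral_2_eq_2 add_divide_distrib)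

lemma cellP:
  fixes dx dy dz :: real and U Y :: "nat \<Rightarrow> nat \<Rightarrow> nat \<Rightarrow> real" and i0 j0 k0 :: nat
  defines "PP \<equiv> \<lambda>i j k. dx*dy*dz * U (i+1) (j+1) (k+1) * (Y i j k)^2"
  shows "potE 1 1 1 dx dy dz (\<lambda>a b c. U (i0+a) (j0+b) (k0+c)) (\<lambda>a b c. Y (i0+a) (j0+b) (k0+c)) =
   (PP i0 j0 k0 + PP (i0+1) j0 k0 + PP i0 (j0+1) k0 + PP (i0+1) (j0+1) k0
        + PP i0 j0 (k0+1) + PP (i0+1) j0 (k0+1) + PP i0 (j0+1) (k0+1) + PP (i0+1) (j0+1) (k0+1)) / 8"
  unfolding potE_def PP_def by (simp add: itw_def numeral_2_eq_2 add_divide_distrib)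

lemma cellM:
  fixes dx dy dz :: real and Y :: "nat \<Rightarrow> nat \<Rightarrow> nat \<Rightarrow> real" and i0 j0 k0 :: nat
  defines "PP \<equiv> \<lambda>i j k. dx*dy*dz * (Y i j k)^2"
  shows "massE 1 1 1 dx dy dz (\<lambda>a b c. Y (i0+a) (j0+b) (k0+c)) =
   (PP i0 j0 k0 + PP (i0+1) j0 k0 + PP i0 (j0+1) k0 + PP (i0+1) (j0+1) k0
        + PP i0 j0 (k0+1) + PP (i0+1) j0 (k0+1) + PP i0 (j0+1) (k0+1) + PP (i0+1) (j0+1) (k0+1)) / 8"
  unfolding massE_def PP_def by (simp add: itw_def numeral_2_eq_2 add_divide_distrib)

lemma asmX:
  assumes ny: "ny \<ge> 1" and nz: "nz \<ge> 1"
  shows "kinX nx ny nz dx dy dz Y = (\<Sum>k0<nz. \<Sum>j0<ny. \<Sum>i0<nx. kinX 1 1 1 dx dy dz (\<lambda>a b c. Y (i0+a) (j0+b) (k0+c)))"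
proof -
  define P where "P j k = (\<Sum>i<nx. dy*dz/dx * (Y (i+1) j k - Y i j k)^2)" for j k
  have "kinX nx ny nz dx dy dz Y = (\<Sum>k<nz+1. \<Sum>j<ny+1. itw (nz+1) k * itw (ny+1) j * P j k)"
    unfolding kinX_def P_def by (intro sum.cong refl) (simp add: sum_distrib_left mult_ac)
  also have "\<dots> = (\<Sum>k0<nz. \<Sum>j0<ny. (P j0 k0 + P (j0+1) k0 + P j0 (k0+1) + P (j0+1) (k0+1)) / 4)"
    by (rule A2D[OF ny nz])
  also have "\<dots> = (\<Sum>k0<nz. \<Sum>j0<ny. \<Sum>i0<nx. kinX 1 1 1 dx dy dz (\<lambda>a b c. Y (i0+a) (j0+b) (k0+c)))"
    unfolding cellX P_def by (intro sum.cong refl) (simp only: sum_quarter)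
  finally show ?thesis .
qed

lemma asmY:
  assumes nx: "nx \<ge> 1" and nz: "nz \<ge> 1"
  shows "kinY nx ny nz dx dy dz Y = (\<Sum>k0<nz. \<Sum>j0<ny. \<Sum>i0<nx. kinY 1 1 1 dx dy dz (\<lambda>a b c. Y (i0+a) (j0+b) (k0+c)))"
proof -
  define P where "P i k = (\<Sum>j<ny. dx*dz/dy * (Y i (j+1) k - Y i j k)^2)" for i k
  have "kinY nx ny nz dx dy dz Y = (\<Sum>k<nz+1. \<Sum>i<nx+1. \<Sum>j<ny. dx*dz/dy * (itw (nz+1) k * itw (nx+1) i) * (Y i (j+1) k - Y i j k)^2)"
    unfolding kinY_def by (rule sum.cong[OF refl], rule sum.swap)
  also have "\<dots> = (\<Sum>k<nz+1. \<Sum>i<nx+1. itw (nz+1) k * itw (nx+1) i * P i k)"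
    unfolding P_def by (intro sum.cong refl) (simp add: sum_distrib_left mult_ac)
  also have "\<dots> = (\<Sum>k0<nz. \<Sum>i0<nx. (P i0 k0 + P (i0+1) k0 + P i0 (k0+1) + P (i0+1) (k0+1)) / 4)"
    by (rule A2D[OF nx nz])
  also have "\<dots> = (\<Sum>k0<nz. \<Sum>i0<nx. \<Sum>j0<ny. kinY 1 1 1 dx dy dz (\<lambda>a b c. Y (i0+a) (j0+b) (k0+c)))"
    unfolding cellY P_def by (intro sum.cong refl) (simp only: sum_quarter)
  also have "\<dots> = (\<Sum>k0<nz. \<Sum>j0<ny. \<Sum>i0<nx. kinY 1 1 1 dx dy dz (\<lambda>a b c. Y (i0+a) (j0+b) (k0+c)))"
    by (rule sum.cong[OF refl], rule sum.swap)
  finally show ?thesis .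
qed

lemma asmZ:
  assumes nx: "nx \<ge> 1" and ny: "ny \<ge> 1"
  shows "kinZ nx ny nz dx dy dz Y = (\<Sum>k0<nz. \<Sum>j0<ny. \<Sum>i0<nx. kinZ 1 1 1 dx dy dz (\<lambda>a b c. Y (i0+a) (j0+b) (k0+c)))"
proof -
  define P where "P i j = (\<Sum>k<nz. dx*dy/dz * (Y i j (k+1) - Y i j k)^2)" for i j
  have "kinZ nx ny nz dx dy dz Y = (\<Sum>j<ny+1. \<Sum>k<nz. \<Sum>i<nx+1. dx*dy/dz * (itw (ny+1) j * itw (nx+1) i) * (Y i j (k+1) - Y i j k)^2)"
    unfolding kinZ_def by (rule sum.swap)
  also have "\<dots> = (\<Sum>j<ny+1. \<Sum>i<nx+1. \<Sum>k<nz. dx*dy/dz * (itw (ny+1) j * itw (nx+1) i) * (Y i j (k+1) - Y i j k)^2)"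
    by (rule sum.cong[OF refl], rule sum.swap)
  also have "\<dots> = (\<Sum>j<ny+1. \<Sum>i<nx+1. itw (ny+1) j * itw (nx+1) i * P i j)"
    unfolding P_def by (intro sum.cong refl) (simp add: sum_distrib_left mult_ac)
  also have "\<dots> = (\<Sum>j0<ny. \<Sum>i0<nx. (P i0 j0 + P (i0+1) j0 + P i0 (j0+1) + P (i0+1) (j0+1)) / 4)"
    by (rule A2D[OF nx ny])
  also have "\<dots> = (\<Sum>j0<ny. \<Sum>i0<nx. \<Sum>k0<nz. kinZ 1 1 1 dx dy dz (\<lambda>a b c. Y (i0+a) (j0+b) (k0+c)))"
    unfolding cellZ P_def by (intro sum.cong refl) (simp only: sum_quarter)
  also have "\<dots> = (\<Sum>j0<ny. \<Sum>k0<nz. \<Sum>i0<nx. kinZ 1 1 1 dx dy dz (\<lambda>a b c. Y (i0+a) (j0+b) (k0+c)))"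
    by (rule sum.cong[OF refl], rule sum.swap[symmetric])
  also have "\<dots> = (\<Sum>k0<nz. \<Sum>j0<ny. \<Sum>i0<nx. kinZ 1 1 1 dx dy dz (\<lambda>a b c. Y (i0+a) (j0+b) (k0+c)))"
    by (rule sum.swap)
  finally show ?thesis .
qed

lemma asmP:
  assumes nx: "nx \<ge> 1" and ny: "ny \<ge> 1" and nz: "nz \<ge> 1"
  shows "potE nx ny nz dx dy dz U Y = (\<Sum>k0<nz. \<Sum>j0<ny. \<Sum>i0<nx.
      potE 1 1 1 dx dy dz (\<lambda>a b c. U (i0+a) (j0+b) (k0+c)) (\<lambda>a b c. Y (i0+a) (j0+b) (k0+c)))"
proof -
  define PP where "PP i j k = dx*dy*dz * U (i+1) (j+1) (k+1) * (Y i j k)^2" for i j k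
  have "potE nx ny nz dx dy dz U Y = (\<Sum>k<nz+1. \<Sum>j<ny+1. \<Sum>i<nx+1. itw (nz+1) k * (itw (ny+1) j * itw (nx+1) i) * PP i j k)"
    unfolding potE_def PP_def by (intro sum.cong refl) (simp add: mult_ac)
  also have "\<dots> = (\<Sum>k0<nz. \<Sum>j0<ny. \<Sum>i0<nx. (PP i0 j0 k0 + PP (i0+1) j0 k0 + PP i0 (j0+1) k0 + PP (i0+1) (j0+1) k0
        + PP i0 j0 (k0+1) + PP (i0+1) j0 (k0+1) + PP i0 (j0+1) (k0+1) + PP (i0+1) (j0+1) (k0+1)) / 8)"
    by (rule A3D[OF nx ny nz])
  also have "\<dots> = (\<Sum>k0<nz. \<Sum>j0<ny. \<Sum>i0<nx.
      potE 1 1 1 dx dy dz (\<lambda>a b c. U (i0+a) (j0+b) (k0+c)) (\<lambda>a b c. Y (i0+a) (j0+b) (k0+c)))"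
    unfolding cellP PP_def ..
  finally show ?thesis .
qed

lemma asmM:
  assumes nx: "nx \<ge> 1" and ny: "ny \<ge> 1" and nz: "nz \<ge> 1"
  shows "massE nx ny nz dx dy dz Y = (\<Sum>k0<nz. \<Sum>j0<ny. \<Sum>i0<nx.
      massE 1 1 1 dx dy dz (\<lambda>a b c. Y (i0+a) (j0+b) (k0+c)))"
proof -
  define PP where "PP i j k = dx*dy*dz * (Y i j k)^2" for i j k
  have "massE nx ny nz dx dy dz Y = (\<Sum>k<nz+1. \<Sum>j<ny+1. \<Sum>i<nx+1. itw (nz+1) k * (itw (ny+1) j * itw (nx+1) i) * PP i j k)"
    unfolding massE_def PP_def by (intro sum.cong refl) (simp add: mult_ac)
  also have "\<dots> = (\<Sum>k0<nz. \<Sum>j0<ny. \<Sum>i0<nx. (PP i0 j0 k0 + PP (i0+1) j0 k0 + PP i0 (j0+1) k0 + PP (i0+1) (j0+1) k0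
        + PP i0 j0 (k0+1) + PP (i0+1) j0 (k0+1) + PP i0 (j0+1) (k0+1) + PP (i0+1) (j0+1) (k0+1)) / 8)"
    by (rule A3D[OF nx ny nz])
  also have "\<dots> = (\<Sum>k0<nz. \<Sum>j0<ny. \<Sum>i0<nx. massE 1 1 1 dx dy dz (\<lambda>a b c. Y (i0+a) (j0+b) (k0+c)))"
    unfolding cellM PP_def ..
  finally show ?thesis .
qed

definition vecY :: "nat \<Rightarrow> nat \<Rightarrow> nat \<Rightarrow> real \<Rightarrow> real \<Rightarrow> real \<Rightarrow> (nat \<Rightarrow> nat \<Rightarrow> nat \<Rightarrow> real) \<Rightarrow> real vec" where
  "vecY nx ny nz dx dy dz Y = vec (NNn nx ny nz) (\<lambda>r. Y (r mod (nx+1)) ((r div (nx+1)) mod (ny+1)) (r div ((nx+1)*(ny+1)))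
      * sqrt (dvf dx dy dz nx ny nz r))"

definition Efun :: "real \<Rightarrow> real \<Rightarrow> real \<Rightarrow> real \<Rightarrow> real \<Rightarrow> nat \<Rightarrow> nat \<Rightarrow> nat \<Rightarrow> (nat \<Rightarrow> nat \<Rightarrow> nat \<Rightarrow> real) \<Rightarrow> (nat \<Rightarrow> nat \<Rightarrow> nat \<Rightarrow> real) \<Rightarrow> real" where
  "Efun hbar m dx dy dz nx ny nz U Y = hbar^2/(2*m) *
     (kinX nx ny nz dx dy dz Y + kinY nx ny nz dx dy dz Y + kinZ nx ny nz dx dy dz Y) + potE nx ny nz dx dy dz U Y"

lemma vecY_carrier: "vecY nx ny nz dx dy dz Y \<in> carrier_vec (NNn nx ny nz)"
  unfolding vecY_def by simp

lemma B_quad_Y: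
  assumes d: "dx > 0" "dy > 0" "dz > 0"
  shows "vecY nx ny nz dx dy dz Y \<bullet> (Bm hbar m dx dy dz nx ny nz U *\<^sub>v vecY nx ny nz dx dy dz Y)
           = (1/hbar) * Efun hbar m dx dy dz nx ny nz U Y"
    "vecY nx ny nz dx dy dz Y \<bullet> vecY nx ny nz dx dy dz Y = massE nx ny nz dx dy dz Y"
proof -
  let ?x = "vecY nx ny nz dx dy dz Y"
  define Y' where "Y' = (\<lambda>i j k. ?x$(k*((ny+1)*(nx+1)) + (j*(nx+1)+i)) / sqrt (dx*dy*dz*(itw (nz+1) k * (itw (ny+1) j * itw (nx+1) i))))"
  have ag: "agree nx ny nz Y' Y"
    unfolding agree_def
  proof (intro allI impI)
    fix i j k assume ijk: "i \<le> nx" "j \<le> ny" "k \<le> nz"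
    have i: "i < nx+1" and j: "j < ny+1" and k: "k < nz+1" using ijk by auto
    have r: "k*((ny+1)*(nx+1)) + (j*(nx+1)+i) < NNn nx ny nz"
      using idx_less[OF j i] idx_less[OF k, of "j*(nx+1)+i" "(ny+1)*(nx+1)"] by simp
    define dd where "dd = dx*dy*dz*(itw (nz+1) k * (itw (ny+1) j * itw (nx+1) i))"
    have dd: "dd > 0" unfolding dd_def using d itw_pos by simp
    have "?x$(k*((ny+1)*(nx+1)) + (j*(nx+1)+i)) = Y i j k * sqrt dd"
      unfolding vecY_def dd_def using r dvf_enc[OF i j, of dx dy dz nz k]
        enc_props(1-3)[where a="nx+1" and b="ny+1" and i=i and j=j and k=k, OF i j] by simp
    thus "Y' i j k = Y i j k" unfolding Y'_def dd_def[symmetric] using dd by simp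
  qed
  show "?x \<bullet> (Bm hbar m dx dy dz nx ny nz U *\<^sub>v ?x) = (1/hbar) * Efun hbar m dx dy dz nx ny nz U Y"
    using B_quad(1)[OF vecY_carrier[of nx ny nz dx dy dz Y] d, where hbar=hbar and m=m and U=U] agree_cong[OF ag]
    unfolding Efun_def Y'_def by simp
  show "?x \<bullet> ?x = massE nx ny nz dx dy dz Y"
    using B_quad(2)[OF vecY_carrier[of nx ny nz dx dy dz Y] d] agree_cong[OF ag]
    unfolding Y'_def by simp
qed

lemma massE_nonneg: "dx > 0 \<Longrightarrow> dy > 0 \<Longrightarrow> dz > 0 \<Longrightarrow> massE nx ny nz dx dy dz Y \<ge> 0"
  unfolding massE_def using itw_pos by (intro sum_nonneg) (simp add: less_imp_le)

lemma asmE: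
  assumes nx: "nx \<ge> 1" and ny: "ny \<ge> 1" and nz: "nz \<ge> 1"
  shows "Efun hbar m dx dy dz nx ny nz U Y = (\<Sum>k0<nz. \<Sum>j0<ny. \<Sum>i0<nx.
      Efun hbar m dx dy dz 1 1 1 (\<lambda>a b c. U (i0+a) (j0+b) (k0+c)) (\<lambda>a b c. Y (i0+a) (j0+b) (k0+c)))"
  unfolding Efun_def asmX[OF ny nz] asmY[OF nx nz] asmZ[OF nx ny] asmP[OF nx ny nz]
  by (simp only: sum.distrib sum_distrib_left distrib_left)

lemma negpow_sq: "((-1::real)^i)^2 = 1"
  by (induct i) auto

lemma rho_pos:
  assumes h: "hbar > 0" and m: "m > 0" and d: "dx > 0" "dy > 0" "dz > 0" and nx: "nx \<ge> 1"
  shows "spectral_radius (map_mat complex_of_real (Bm hbar m dx dy dz nx ny nz U)) > 0"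
proof -
  let ?B = "Bm hbar m dx dy dz nx ny nz U"
  let ?A = "map_mat complex_of_real ?B"
  have NN: "NNn nx ny nz > 0" by simp
  have A: "?A \<in> carrier_mat (NNn nx ny nz) (NNn nx ny nz)" using B_carrier by simp
  have r0: "spectral_radius ?A \<ge> 0" by (rule sr_nonneg[OF A NN])
  show ?thesis
  proof (rule ccontr)
    assume "\<not> ?thesis"
    hence rz: "spectral_radius ?A = 0" using r0 by simp
    have E0: "Efun hbar m dx dy dz nx ny nz U Y = 0" for Y
    proof -
      have "\<bar>vecY nx ny nz dx dy dz Y \<bullet> (?B *\<^sub>v vecY nx ny nz dx dy dz Y)\<bar> \<le> spectral_radius ?A * (vecY nx ny nz dx dy dz Y \<bullet> vecY nx ny nz dx dy dz Y)"
        by (rule numrad[OF B_carrier B_sym vecY_carrier])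
      hence "(1/hbar) * Efun hbar m dx dy dz nx ny nz U Y = 0" unfolding rz B_quad_Y[OF d] by simp
      thus ?thesis using h by simp
    qed
    define Y1 where "Y1 = (\<lambda>(i::nat) (j::nat) (k::nat). (1::real))"
    define Y2 where "Y2 = (\<lambda>(i::nat) (j::nat) (k::nat). (-1::real)^i)"
    have k1: "kinX nx ny nz dx dy dz Y1 = 0" "kinY nx ny nz dx dy dz Y1 = 0" "kinZ nx ny nz dx dy dz Y1 = 0"
      unfolding kinX_def kinY_def kinZ_def Y1_def by simp_all
    have k2: "kinY nx ny nz dx dy dz Y2 = 0" "kinZ nx ny nz dx dy dz Y2 = 0"
      unfolding kinY_def kinZ_def Y2_def by simp_all
    have p: "potE nx ny nz dx dy dz U Y2 = potE nx ny nz dx dy dz U Y1"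
      unfolding potE_def Y1_def Y2_def by (simp add: negpow_sq)
    have kx: "kinX nx ny nz dx dy dz Y2 > 0"
      unfolding kinX_def Y2_def using nx d itw_pos
      by (intro sum_pos) (auto simp: power2_eq_square lessThan_empty_iff)
    have "hbar^2/(2*m) * kinX nx ny nz dx dy dz Y2 = Efun hbar m dx dy dz nx ny nz U Y2 - Efun hbar m dx dy dz nx ny nz U Y1"
      unfolding Efun_def k1 k2 p by simp
    also have "\<dots> = 0" using E0 by simp
    finally have "hbar^2/(2*m) * kinX nx ny nz dx dy dz Y2 = 0" .
    moreover have "hbar^2/(2*m) > 0" using h m by simp
    ultimately show False using kx h m by simp
  qed
qed

lemma cell_bound:
  assumes h: "hbar > 0" and d: "dx > 0" "dy > 0" "dz > 0"
  shows "\<bar>(1/hbar) * Efun hbar m dx dy dz 1 1 1 Uc Yc\<bar>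
     \<le> spectral_radius (map_mat complex_of_real (Bm hbar m dx dy dz 1 1 1 Uc)) * massE 1 1 1 dx dy dz Yc"
  using numrad[OF B_carrier[of hbar m dx dy dz 1 1 1 Uc] B_sym vecY_carrier[of 1 1 1 dx dy dz Yc]]
  unfolding B_quad_Y[OF d] .

lemma abs_sum3: "\<bar>\<Sum>k<c. \<Sum>j<b. \<Sum>i<a. f i j k\<bar> \<le> (\<Sum>k<c. \<Sum>j<b. \<Sum>i<a. \<bar>f i j k\<bar>::real)"
proof -
  have "\<bar>\<Sum>k<c. \<Sum>j<b. \<Sum>i<a. f i j k\<bar> \<le> (\<Sum>k<c. \<bar>\<Sum>j<b. \<Sum>i<a. f i j k\<bar>)" by (rule sum_abs)
  also have "\<dots> \<le> (\<Sum>k<c. \<Sum>j<b. \<bar>\<Sum>i<a. f i j k\<bar>)" by (intro sum_mono sum_abs)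
  also have "\<dots> \<le> (\<Sum>k<c. \<Sum>j<b. \<Sum>i<a. \<bar>f i j k\<bar>)" by (intro sum_mono sum_abs)
  finally show ?thesis .
qed

lemma rho_le_cell:
  assumes h: "hbar > 0" and m: "m > 0" and d: "dx > 0" "dy > 0" "dz > 0"
    and nx: "nx \<ge> 1" and ny: "ny \<ge> 1" and nz: "nz \<ge> 1"
  shows "\<exists>i0<nx. \<exists>j0<ny. \<exists>k0<nz. spectral_radius (map_mat complex_of_real (Bm hbar m dx dy dz nx ny nz U))
      \<le> spectral_radius (map_mat complex_of_real (Bm hbar m dx dy dz 1 1 1 (\<lambda>a b c. U (i0+a) (j0+b) (k0+c))))"
proof -
  let ?B = "Bm hbar m dx dy dz nx ny nz U"
  define rg where "rg = spectral_radius (map_mat complex_of_real ?B)"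
  define rc where "rc i0 j0 k0 = spectral_radius (map_mat complex_of_real (Bm hbar m dx dy dz 1 1 1 (\<lambda>a b c. U (i0+a) (j0+b) (k0+c))))" for i0 j0 k0
  define I where "I = {..<nx} \<times> {..<ny} \<times> {..<nz}"
  have If: "finite I" and Ine: "I \<noteq> {}" unfolding I_def using nx ny nz by (auto simp: lessThan_empty_iff)
  define R where "R = Max ((\<lambda>(i0,j0,k0). rc i0 j0 k0) ` I)"
  have Rge: "rc i0 j0 k0 \<le> R" if "i0 < nx" "j0 < ny" "k0 < nz" for i0 j0 k0
  proof -
    have "rc i0 j0 k0 \<in> (\<lambda>(i0,j0,k0). rc i0 j0 k0) ` I"
      by (rule image_eqI[of _ _ "(i0,j0,k0)"]) (use that in \<open>auto simp: I_def\<close>)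
    thus ?thesis unfolding R_def using If by (intro Max_ge) auto
  qed
  have "R \<in> (\<lambda>(i0,j0,k0). rc i0 j0 k0) ` I" unfolding R_def using If Ine by (intro Max_in) auto
  then obtain i0 j0 k0 where ijk: "i0 < nx" "j0 < ny" "k0 < nz" and Req: "R = rc i0 j0 k0"
    unfolding I_def by auto
  have NN: "NNn nx ny nz > 0" by simp
  from eig_real[OF B_carrier B_sym NN, of hbar m dx dy dz U] obtain a b where
    ab: "a \<in> carrier_vec (NNn nx ny nz)" "b \<in> carrier_vec (NNn nx ny nz)" "a \<bullet> a + b \<bullet> b > 0"
    and eq: "rg * (a \<bullet> a + b \<bullet> b) = \<bar>a \<bullet> (?B *\<^sub>v a) + b \<bullet> (?B *\<^sub>v b)\<bar>" unfolding rg_def by blast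
  define Ya where "Ya = (\<lambda>i j k. a$(k*((ny+1)*(nx+1)) + (j*(nx+1)+i)) / sqrt (dx*dy*dz*(itw (nz+1) k * (itw (ny+1) j * itw (nx+1) i))))"
  define Yb where "Yb = (\<lambda>i j k. b$(k*((ny+1)*(nx+1)) + (j*(nx+1)+i)) / sqrt (dx*dy*dz*(itw (nz+1) k * (itw (ny+1) j * itw (nx+1) i))))"
  have qa: "a \<bullet> (?B *\<^sub>v a) = (1/hbar) * Efun hbar m dx dy dz nx ny nz U Ya" "a \<bullet> a = massE nx ny nz dx dy dz Ya"
    using B_quad(1)[OF ab(1) d, where hbar=hbar and m=m and U=U] B_quad(2)[OF ab(1) d] unfolding Efun_def Ya_def by simp_all
  have qb: "b \<bullet> (?B *\<^sub>v b) = (1/hbar) * Efun hbar m dx dy dz nx ny nz U Yb" "b \<bullet> b = massE nx ny nz dx dy dz Yb"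
    using B_quad(1)[OF ab(2) d, where hbar=hbar and m=m and U=U] B_quad(2)[OF ab(2) d] unfolding Efun_def Yb_def by simp_all
  define Ec where "Ec Y i0 j0 k0 = (1/hbar) * Efun hbar m dx dy dz 1 1 1 (\<lambda>a b c. U (i0+a) (j0+b) (k0+c)) (\<lambda>a b c. Y (i0+a) (j0+b) (k0+c))" for Y i0 j0 k0
  define Mc where "Mc Y i0 j0 k0 = massE 1 1 1 dx dy dz (\<lambda>a b c. Y (i0+a) (j0+b) (k0+c))" for Y i0 j0 k0
  have Mc0: "Mc Y i0 j0 k0 \<ge> 0" for Y i0 j0 k0 unfolding Mc_def by (rule massE_nonneg[OF d])
  have cb: "\<bar>Ec Y i0 j0 k0\<bar> \<le> rc i0 j0 k0 * Mc Y i0 j0 k0" for Y i0 j0 k0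
    unfolding Ec_def rc_def Mc_def by (rule cell_bound[OF h d])
  have Esum: "(1/hbar) * Efun hbar m dx dy dz nx ny nz U Y = (\<Sum>k0<nz. \<Sum>j0<ny. \<Sum>i0<nx. Ec Y i0 j0 k0)" for Y
    unfolding asmE[OF nx ny nz] Ec_def by (simp add: sum_distrib_left)
  have Msum: "massE nx ny nz dx dy dz Y = (\<Sum>k0<nz. \<Sum>j0<ny. \<Sum>i0<nx. Mc Y i0 j0 k0)" for Y
    unfolding asmM[OF nx ny nz] Mc_def ..
  define Mt where "Mt = a \<bullet> a + b \<bullet> b"
  have Mt: "Mt = (\<Sum>k0<nz. \<Sum>j0<ny. \<Sum>i0<nx. Mc Ya i0 j0 k0 + Mc Yb i0 j0 k0)"
    unfolding Mt_def qa(2) qb(2) Msum by (simp add: sum.distrib)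
  have "rg * Mt = \<bar>\<Sum>k0<nz. \<Sum>j0<ny. \<Sum>i0<nx. Ec Ya i0 j0 k0 + Ec Yb i0 j0 k0\<bar>"
    unfolding Mt_def eq qa(1) qb(1) Esum by (simp add: sum.distrib)
  also have "\<dots> \<le> (\<Sum>k0<nz. \<Sum>j0<ny. \<Sum>i0<nx. \<bar>Ec Ya i0 j0 k0 + Ec Yb i0 j0 k0\<bar>)" by (rule abs_sum3)
  also have "\<dots> \<le> (\<Sum>k0<nz. \<Sum>j0<ny. \<Sum>i0<nx. R * (Mc Ya i0 j0 k0 + Mc Yb i0 j0 k0))"
  proof (intro sum_mono)
    fix k0 j0 i0 assume "k0 \<in> {..<nz}" "j0 \<in> {..<ny}" "i0 \<in> {..<nx}"
    hence r: "rc i0 j0 k0 \<le> R" using Rge by auto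
    have "\<bar>Ec Ya i0 j0 k0 + Ec Yb i0 j0 k0\<bar> \<le> \<bar>Ec Ya i0 j0 k0\<bar> + \<bar>Ec Yb i0 j0 k0\<bar>" by (rule abs_triangle_ineq)
    also have "\<dots> \<le> rc i0 j0 k0 * Mc Ya i0 j0 k0 + rc i0 j0 k0 * Mc Yb i0 j0 k0" using cb by (intro add_mono)
    also have "\<dots> = rc i0 j0 k0 * (Mc Ya i0 j0 k0 + Mc Yb i0 j0 k0)" by (simp add: distrib_left)
    also have "\<dots> \<le> R * (Mc Ya i0 j0 k0 + Mc Yb i0 j0 k0)" using r Mc0 by (intro mult_right_mono) (auto intro: add_nonneg_nonneg)
    finally show "\<bar>Ec Ya i0 j0 k0 + Ec Yb i0 j0 k0\<bar> \<le> R * (Mc Ya i0 j0 k0 + Mc Yb i0 j0 k0)" .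
  qed
  also have "\<dots> = R * Mt" unfolding Mt by (simp only: sum_distrib_left)
  finally have "rg * Mt \<le> R * Mt" .
  hence "rg \<le> R" using ab(3) unfolding Mt_def by simp
  thus ?thesis using ijk unfolding Req rg_def rc_def by blast
qed

theorem lemma5:
  fixes hbar m dx dy dz :: real and nx ny nz :: nat and U :: "nat \<Rightarrow> nat \<Rightarrow> nat \<Rightarrow> real"
  assumes "hbar > 0" "m > 0" "dx > 0" "dy > 0" "dz > 0"
    and "nx \<ge> 1" "ny \<ge> 1" "nz \<ge> 1"
  shows "Min {cfl_gen hbar m dx dy dz 1 1 1 (\<lambda>a b c. U (i + a - 1) (j + b - 1) (k + c - 1)) | i j k.
               i \<in> {1..nx} \<and> j \<in> {1..ny} \<and> k \<in> {1..nz}}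
         \<le> cfl_gen hbar m dx dy dz nx ny nz U"
proof -
  note h = assms(1) and mm = assms(2) and d = assms(3-5) and n = assms(6-8)
  define f where "f i j k = cfl_gen hbar m dx dy dz 1 1 1 (\<lambda>a b c. U (i + a - 1) (j + b - 1) (k + c - 1))" for i j k
  define S where "S = {f i j k | i j k. i \<in> {1..nx} \<and> j \<in> {1..ny} \<and> k \<in> {1..nz}}"
  have "S \<subseteq> (\<lambda>(i,j,k). f i j k) ` ({1..nx} \<times> {1..ny} \<times> {1..nz})"
  proof
    fix y assume "y \<in> S"
    then obtain i j k where y: "y = f i j k" "i \<in> {1..nx}" "j \<in> {1..ny}" "k \<in> {1..nz}" unfolding S_def by blast
    show "y \<in> (\<lambda>(i,j,k). f i j k) ` ({1..nx} \<times> {1..ny} \<times> {1..nz})"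
      by (rule image_eqI[of _ _ "(i,j,k)"]) (use y in auto)
  qed
  hence Sf: "finite S" by (rule finite_subset) auto
  from rho_le_cell[OF h mm d n] obtain i0 j0 k0 where ijk: "i0 < nx" "j0 < ny" "k0 < nz" and
    le: "spectral_radius (map_mat complex_of_real (Bm hbar m dx dy dz nx ny nz U))
      \<le> spectral_radius (map_mat complex_of_real (Bm hbar m dx dy dz 1 1 1 (\<lambda>a b c. U (i0+a) (j0+b) (k0+c))))"
    by blast
  have pos: "spectral_radius (map_mat complex_of_real (Bm hbar m dx dy dz nx ny nz U)) > 0"
    by (rule rho_pos[OF h mm d n(1)])
  have lam: "(\<lambda>a b c. U (Suc i0 + a - 1) (Suc j0 + b - 1) (Suc k0 + c - 1)) = (\<lambda>a b c. U (i0+a) (j0+b) (k0+c))"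
    by simp
  have mem: "f (Suc i0) (Suc j0) (Suc k0) \<in> S" unfolding S_def using ijk by fastforce
  have "Min S \<le> f (Suc i0) (Suc j0) (Suc k0)" by (rule Min_le[OF Sf mem])
  also have "\<dots> = 2 / spectral_radius (map_mat complex_of_real (Bm hbar m dx dy dz 1 1 1 (\<lambda>a b c. U (i0+a) (j0+b) (k0+c))))"
    unfolding f_def cfl_Bm lam ..
  also have "\<dots> \<le> 2 / spectral_radius (map_mat complex_of_real (Bm hbar m dx dy dz nx ny nz U))"
    using le pos by (intro divide_left_mono) auto
  also have "\<dots> = cfl_gen hbar m dx dy dz nx ny nz U" unfolding cfl_Bm ..
  finally show ?thesis unfolding S_def f_def .
qed

end
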